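(* Let $S\subset\mathbb{R}^2$ be a finite point set and let $\mathbf{T}_1,\ldots,\mathbf{T}_k$ be triangulations of $S$. Let $G$ be the complete directed graph on vertex set $\{1,\ldots,k\}$ in which the arc $(i,j)$, $i\ne j$, has length $d(\mathbf{T}_i,\mathbf{T}_j)$. Then for every solution (a triangulation $C$ of $S$ together with paths $P_1,\ldots,P_k$, where $P_i$ goes from $\mathbf{T}_i$ to $C$), the objective value $\sum_{i=1}^k \mathrm{length}(P_i)$ is at least one half of the length of any cycle packing of $G$.
   Context: A parallel flip transforms a triangulation $T$ of $S$ (viewed as an edge set) into $T'=(T\setminus E)\cup E'$, where $E\subseteq T$, such that $T'$ is a triangulation of $S$ and no two edges of $E$ lie in a common triangle of $T$. A path of length $\ell$ is a sequence of triangulations $T_0,\ldots,T_\ell$ of $S$ such that each $T_{i+1}$ is obtained from $T_i$ by a parallel flip. The distance $d(T,T')$ is the minimum length of a path from $T$ to $T'$. A cycle packing of a directed graph is a collection of vertex-disjoint directed cycles (a set of arcs in which every vertex has at most one outgoing and at most one incoming arc; cycles with two arcs are allowed). The length of a cycle packing is the sum of the lengths of its arcs. *)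

theory Defs
  imports "HOL-Analysis.Analysis"
begin

type_synonym point = "real \<times> real"
type_synonym edge = "point set"
type_synonym triangulation = "edge set"

definition edges_of :: "point set \<Rightarrow> edge set" where
  "edges_of S = {e. e \<subseteq> S \<and> card e = 2 \<and> convex hull e \<inter> S = e}"

text \<open>Two segments do not cross: they meet at most in a common endpoint.\<close>
definition noncrossing :: "edge \<Rightarrow> edge \<Rightarrow> bool" where
  "noncrossing e f \<longleftrightarrow> convex hull e \<inter> convex hull f \<subseteq> convex hull (e \<inter> f)"

definition is_triangulation :: "point set \<Rightarrow> triangulation \<Rightarrow> bool" where
  "is_triangulation S T \<longleftrightarrow>
     T \<subseteq> edges_of S \<and>
     (\<forall>e\<in>T. \<forall>f\<in>T. noncrossing e f) \<and>
     (\<forall>e\<in>edges_of S - T. \<exists>f\<in>T. \<not> noncrossing e f)"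

definition triangles_of :: "point set \<Rightarrow> triangulation \<Rightarrow> point set set" where
  "triangles_of S T = {{a,b,c} | a b c. a \<noteq> b \<and> b \<noteq> c \<and> a \<noteq> c \<and>
      {a,b} \<in> T \<and> {b,c} \<in> T \<and> {a,c} \<in> T \<and>
      convex hull {a,b,c} \<inter> S = {a,b,c}}"

definition parallel_flip :: "point set \<Rightarrow> triangulation \<Rightarrow> triangulation \<Rightarrow> bool" where
  "parallel_flip S T T' \<longleftrightarrow>
     (\<exists>E E'. E \<subseteq> T \<and> T' = (T - E) \<union> E' \<and> is_triangulation S T' \<and>
        (\<forall>e\<in>E. \<forall>f\<in>E. e \<noteq> f \<longrightarrow> \<not> (\<exists>t\<in>triangles_of S T. e \<subseteq> t \<and> f \<subseteq> t)))"

definition is_flip_path :: "point set \<Rightarrow> triangulation list \<Rightarrow> bool" where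
  "is_flip_path S P \<longleftrightarrow> P \<noteq> [] \<and> (\<forall>X\<in>set P. is_triangulation S X) \<and>
     (\<forall>i. Suc i < length P \<longrightarrow> parallel_flip S (P ! i) (P ! Suc i))"

definition path_length :: "triangulation list \<Rightarrow> nat" where
  "path_length P = length P - 1"

definition flip_dist :: "point set \<Rightarrow> triangulation \<Rightarrow> triangulation \<Rightarrow> nat" where
  "flip_dist S T T' = (LEAST l. \<exists>P. is_flip_path S P \<and> hd P = T \<and> last P = T' \<and> path_length P = l)"

text \<open>Cycle packing in the complete digraph on {1..k}: a set of arcs (i,j), i \<noteq> j,
  in which every vertex has at most one outgoing and at most one incoming arc, and
  equally many of each (so the arcs form vertex-disjoint directed cycles).\<close>
definition is_cycle_packing :: "nat \<Rightarrow> (nat \<times> nat) set \<Rightarrow> bool" where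
  "is_cycle_packing k A \<longleftrightarrow>
     A \<subseteq> {(i,j). i \<in> {1..k} \<and> j \<in> {1..k} \<and> i \<noteq> j} \<and>
     (\<forall>v. card {j. (v,j) \<in> A} \<le> 1 \<and> card {i. (i,v) \<in> A} \<le> 1 \<and>
          card {j. (v,j) \<in> A} = card {i. (i,v) \<in> A})"

end

theory Submission
  imports Defs
begin


definition ori :: "point \<Rightarrow> point \<Rightarrow> point \<Rightarrow> real" where
  "ori a b c = (fst b - fst a) * (snd c - snd a) - (snd b - snd a) * (fst c - fst a)"

lemma ori_rot: "ori a b c = ori b c a"
  by (simp add: ori_def algebra_simps)
lemma ori_swap: "ori a b c = - ori b a c"
  by (simp add: ori_def algebra_simps)
lemma ori_swap2: "ori a b c = - ori a c b"
  by (simp add: ori_def algebra_simps)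
lemma ori_triv[simp]: "ori a a c = 0" "ori a b a = 0" "ori a b b = 0"
  by (simp_all add: ori_def algebra_simps)

lemma ori_comb: "ori a b ((1-t) *\<^sub>R x + t *\<^sub>R y) = (1-t) * ori a b x + t * ori a b y"
  by (simp add: ori_def algebra_simps)

lemma ori_comb3: "u + v + w = 1 \<Longrightarrow>
   ori a b (u *\<^sub>R x + v *\<^sub>R y + w *\<^sub>R z) = u * ori a b x + v * ori a b y + w * ori a b z"
  unfolding ori_def by (simp add: algebra_simps) algebra

lemma ori_sum: "ori b c w + ori c a w + ori a b w = ori a b c"
  by (simp add: ori_def algebra_simps)

lemma cramer:
  assumes "ori a b c \<noteq> 0"
  shows "w = (ori b c w / ori a b c) *\<^sub>R a + (ori c a w / ori a b c) *\<^sub>R b + (ori a b w / ori a b c) *\<^sub>R c"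
proof -
  let ?D = "ori a b c"
  have e1: "ori b c w * fst a + ori c a w * fst b + ori a b w * fst c = ?D * fst w"
    by (simp add: ori_def algebra_simps)
  have e2: "ori b c w * snd a + ori c a w * snd b + ori a b w * snd c = ?D * snd w"
    by (simp add: ori_def algebra_simps)
  show ?thesis
  proof (rule prod_eqI)
    show "fst w = fst ((ori b c w / ?D) *\<^sub>R a + (ori c a w / ?D) *\<^sub>R b + (ori a b w / ?D) *\<^sub>R c)"
      using e1 assms by (simp add: field_simps)
    show "snd w = snd ((ori b c w / ?D) *\<^sub>R a + (ori c a w / ?D) *\<^sub>R b + (ori a b w / ?D) *\<^sub>R c)"
      using e2 assms by (simp add: field_simps)
  qed
qed

definition bar :: "point \<Rightarrow> point \<Rightarrow> point \<Rightarrow> point \<Rightarrow> real" where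
  "bar a b c w = ori b c w / ori b c a"

lemma bar_comb: "bar a b c ((1-t) *\<^sub>R x + t *\<^sub>R y) = (1-t) * bar a b c x + t * bar a b c y"
  by (simp add: bar_def ori_comb add_divide_distrib)

lemma bar_vert: "ori a b c \<noteq> 0 \<Longrightarrow> bar a b c a = 1"
  by (simp add: bar_def ori_rot[of a b c])
lemma bar_vert0[simp]: "bar a b c b = 0" "bar a b c c = 0"
  by (simp_all add: bar_def)

lemma bar_sum: "ori a b c \<noteq> 0 \<Longrightarrow> bar a b c w + bar b c a w + bar c a b w = 1"
proof -
  assume h: "ori a b c \<noteq> 0"
  have "ori b c a = ori a b c" "ori c a b = ori a b c" by (simp_all add: ori_def algebra_simps)
  then show ?thesis using h ori_sum[of b c w a]
    by (simp add: bar_def add_divide_distrib[symmetric])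
qed

lemma bar_cramer: "ori a b c \<noteq> 0 \<Longrightarrow>
   w = bar a b c w *\<^sub>R a + bar b c a w *\<^sub>R b + bar c a b w *\<^sub>R c"
proof -
  assume h: "ori a b c \<noteq> 0"
  have "ori b c a = ori a b c" "ori c a b = ori a b c" by (simp_all add: ori_def algebra_simps)
  then show ?thesis using cramer[OF h, of w] by (simp add: bar_def)
qed

lemma bar_comb3: "u + v + w = 1 \<Longrightarrow>
   bar a b c (u *\<^sub>R x + v *\<^sub>R y + w *\<^sub>R z) = u * bar a b c x + v * bar a b c y + w * bar a b c z"
  by (simp add: bar_def ori_comb3 add_divide_distrib)

lemma hull3_iff:
  assumes "ori a b c \<noteq> 0"
  shows "w \<in> convex hull {a,b,c} \<longleftrightarrow> bar a b c w \<ge> 0 \<and> bar b c a w \<ge> 0 \<and> bar c a b w \<ge> 0"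
proof
  assume "w \<in> convex hull {a,b,c}"
  then obtain u v x where uv: "0 \<le> u" "0 \<le> v" "0 \<le> x" "u + v + x = 1"
     and w: "w = u *\<^sub>R a + v *\<^sub>R b + x *\<^sub>R c"
    unfolding convex_hull_3 by blast
  have o1: "ori b c a \<noteq> 0" "ori c a b \<noteq> 0" using assms by (simp_all add: ori_def algebra_simps)
  have "bar a b c w = u" using bar_comb3[OF uv(4), of a b c a b c] bar_vert[OF assms] w by simp
  moreover have "bar b c a w = v" using bar_comb3[OF uv(4), of b c a a b c] bar_vert[OF o1(1)] w by simp
  moreover have "bar c a b w = x" using bar_comb3[OF uv(4), of c a b a b c] bar_vert[OF o1(2)] w by simp
  ultimately show "bar a b c w \<ge> 0 \<and> bar b c a w \<ge> 0 \<and> bar c a b w \<ge> 0" using uv by simp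
next
  assume h: "bar a b c w \<ge> 0 \<and> bar b c a w \<ge> 0 \<and> bar c a b w \<ge> 0"
  show "w \<in> convex hull {a,b,c}" unfolding convex_hull_3
    using h bar_sum[OF assms, of w] bar_cramer[OF assms, of w] by blast
qed


lemma seg_ori: "x \<in> closed_segment a b \<Longrightarrow> ori a b x = 0"
  by (auto simp: in_segment ori_comb)

lemma on_lineE:
  assumes "a \<noteq> b" "ori a b w = 0"
  obtains s where "w = (1 - s) *\<^sub>R a + s *\<^sub>R b"
proof -
  define B1 where "B1 = fst b - fst a"
  define B2 where "B2 = snd b - snd a"
  define W1 where "W1 = fst w - fst a"
  define W2 where "W2 = snd w - snd a"
  define N where "N = B1*B1 + B2*B2"
  define P where "P = W1*B1 + W2*B2"
  have N: "N \<noteq> 0" using assms(1) unfolding N_def B1_def B2_def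
    by (auto simp: prod_eq_iff)
  have o: "B1 * W2 = B2 * W1"
    using assms(2) by (simp add: ori_def B1_def B2_def W1_def W2_def)
  have e1: "W1 * N = P * B1" using o unfolding N_def P_def by algebra
  have e2: "W2 * N = P * B2" using o unfolding N_def P_def by algebra
  have "w = (1 - P/N) *\<^sub>R a + (P/N) *\<^sub>R b"
  proof (rule prod_eqI)
    have "fst w = fst a + P/N * B1" using e1 N unfolding W1_def by (simp add: field_simps)
    thus "fst w = fst ((1 - P/N) *\<^sub>R a + (P/N) *\<^sub>R b)" unfolding B1_def by (simp add: algebra_simps)
    have "snd w = snd a + P/N * B2" using e2 N unfolding W2_def by (simp add: field_simps)
    thus "snd w = snd ((1 - P/N) *\<^sub>R a + (P/N) *\<^sub>R b)" unfolding B2_def by (simp add: algebra_simps)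
  qed
  thus ?thesis using that by blast
qed


definition pt :: "point \<Rightarrow> point \<Rightarrow> real \<Rightarrow> point" where
  "pt a b s = (1 - s) *\<^sub>R a + s *\<^sub>R b"

lemma pt_comb: "(1 - t) *\<^sub>R pt a b u1 + t *\<^sub>R pt a b u2 = pt a b ((1-t) * u1 + t * u2)"
  by (simp add: pt_def algebra_simps)

lemma pt_inj: "a \<noteq> b \<Longrightarrow> pt a b s = pt a b s' \<Longrightarrow> s = s'"
proof -
  assume ab: "a \<noteq> b" and e: "pt a b s = pt a b s'"
  have "(s - s') *\<^sub>R (b - a) = 0" using e by (simp add: pt_def algebra_simps)
  thus "s = s'" using ab by simp
qed

lemma pt_0[simp]: "pt a b 0 = a" and pt_1[simp]: "pt a b 1 = b"
  by (simp_all add: pt_def)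

lemma pt_closed: "0 \<le> s \<Longrightarrow> s \<le> 1 \<Longrightarrow> pt a b s \<in> closed_segment a b"
  by (auto simp: pt_def in_segment)

lemma ori_pt: "ori a b (pt a b s) = 0"
  by (simp add: pt_def ori_comb)

lemma pt_ori: "ori x y (pt a b s) = (1 - s) * ori x y a + s * ori x y b"
  by (simp add: pt_def ori_comb)

lemma on_line_pt: "a \<noteq> b \<Longrightarrow> ori a b w = 0 \<Longrightarrow> \<exists>s. w = pt a b s"
  unfolding pt_def by (metis on_lineE)

lemma closed_seg_pt: "x \<in> closed_segment a b \<longleftrightarrow> (\<exists>s. 0 \<le> s \<and> s \<le> 1 \<and> x = pt a b s)"
  by (auto simp: in_segment pt_def)

lemma open_seg_pt: "x \<in> open_segment a b \<longleftrightarrow> a \<noteq> b \<and> (\<exists>s. 0 < s \<and> s < 1 \<and> x = pt a b s)"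
  by (auto simp: in_segment pt_def)


lemma edgeE:
  assumes "e \<in> edges_of S"
  obtains a b where "e = {a,b}" "a \<noteq> b" "a \<in> S" "b \<in> S" "closed_segment a b \<inter> S = {a,b}"
proof -
  have c: "card e = 2" and sub: "e \<subseteq> S" and h: "convex hull e \<inter> S = e"
    using assms by (auto simp: edges_of_def)
  obtain a b where ab: "e = {a,b}" "a \<noteq> b" using c by (meson card_2_iff)
  show ?thesis using that ab sub h by (simp add: segment_convex_hull)
qed

lemma edge_iff: "{a,b} \<in> edges_of S \<longleftrightarrow> a \<noteq> b \<and> a \<in> S \<and> b \<in> S \<and> closed_segment a b \<inter> S = {a,b}"
proof
  assume h: "{a,b} \<in> edges_of S"
  have c: "card {a,b} = 2" and sub: "{a,b} \<subseteq> S" and hh: "convex hull {a,b} \<inter> S = {a,b}"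
    using h by (auto simp: edges_of_def)
  have "a \<noteq> b" using c by (cases "a = b") auto
  thus "a \<noteq> b \<and> a \<in> S \<and> b \<in> S \<and> closed_segment a b \<inter> S = {a,b}" using sub hh
    by (simp add: segment_convex_hull)
next
  assume "a \<noteq> b \<and> a \<in> S \<and> b \<in> S \<and> closed_segment a b \<inter> S = {a,b}"
  thus "{a,b} \<in> edges_of S" by (simp add: edges_of_def segment_convex_hull)
qed

lemma edge_open_free: "{a,b} \<in> edges_of S \<Longrightarrow> open_segment a b \<inter> S = {}"
  unfolding edge_iff open_segment_def by blast

lemma edge_I: "a \<noteq> b \<Longrightarrow> a \<in> S \<Longrightarrow> b \<in> S \<Longrightarrow> open_segment a b \<inter> S = {} \<Longrightarrow> {a,b} \<in> edges_of S"
  unfolding edge_iff open_segment_def by auto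

lemma noncrossing_sym: "noncrossing e f = noncrossing f e"
  unfolding noncrossing_def by (simp add: Int_commute)

lemma pair_sub_eq: "a \<noteq> b \<Longrightarrow> {a,b} \<subseteq> {c,d} \<Longrightarrow> {a,b} = {c,d}"
  by auto

lemma cross_iff:
  assumes e: "{a,b} \<in> edges_of S" and f: "{c,d} \<in> edges_of S"
  shows "\<not> noncrossing {a,b} {c,d} \<longleftrightarrow> {a,b} \<noteq> {c,d} \<and> open_segment a b \<inter> open_segment c d \<noteq> {}"
proof -
  have E: "a \<noteq> b" "a \<in> S" "b \<in> S" "closed_segment a b \<inter> S = {a,b}" using e by (simp_all add: edge_iff)
  have F: "c \<noteq> d" "c \<in> S" "d \<in> S" "closed_segment c d \<inter> S = {c,d}" using f by (simp_all add: edge_iff)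
  show ?thesis
  proof
    assume "\<not> noncrossing {a,b} {c,d}"
    then obtain y where y1: "y \<in> convex hull {a,b}" and y2: "y \<in> convex hull {c,d}"
        and y3: "y \<notin> convex hull ({a,b} \<inter> {c,d})"
      unfolding noncrossing_def by blast
    have ne: "{a,b} \<noteq> {c,d}"
    proof
      assume "{a,b} = {c,d}"
      then have "convex hull ({a,b} \<inter> {c,d}) = convex hull {a,b}" by simp
      then show False using y1 y3 by simp
    qed
    have y1': "y \<in> closed_segment a b" using y1 by (simp add: segment_convex_hull)
    have y2': "y \<in> closed_segment c d" using y2 by (simp add: segment_convex_hull)
    have yS: "y \<notin> S"
    proof
      assume yS: "y \<in> S"
      then have "y \<in> {a,b}" using y1' E(4) by blast
      moreover have "y \<in> {c,d}" using yS y2' F(4) by blast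
      ultimately have "y \<in> {a,b} \<inter> {c,d}" by blast
      then show False using y3 hull_inc by metis
    qed
    have "y \<in> open_segment a b" using y1' yS E(2,3) by (auto simp: open_segment_def)
    moreover have "y \<in> open_segment c d" using y2' yS F(2,3) by (auto simp: open_segment_def)
    ultimately show "{a,b} \<noteq> {c,d} \<and> open_segment a b \<inter> open_segment c d \<noteq> {}" using ne by blast
  next
    assume h: "{a,b} \<noteq> {c,d} \<and> open_segment a b \<inter> open_segment c d \<noteq> {}"
    then obtain y where y1: "y \<in> open_segment a b" and y2: "y \<in> open_segment c d" by blast
    have yab: "y \<noteq> a" "y \<noteq> b" using y1 by (auto simp: open_segment_def)
    have nsub: "\<not> ({a,b} \<subseteq> {c,d})" using h pair_sub_eq E(1) by blast
    have "y \<notin> convex hull ({a,b} \<inter> {c,d})"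
    proof
      assume yh: "y \<in> convex hull ({a,b} \<inter> {c,d})"
      have "{a,b} \<inter> {c,d} \<subseteq> {a} \<or> {a,b} \<inter> {c,d} \<subseteq> {b}" using nsub by blast
      then have "convex hull ({a,b} \<inter> {c,d}) \<subseteq> {a} \<or> convex hull ({a,b} \<inter> {c,d}) \<subseteq> {b}"
        by (metis convex_hull_singleton hull_mono)
      then show False using yh yab by blast
    qed
    moreover have "y \<in> convex hull {a,b}" using y1 by (simp add: open_segment_def segment_convex_hull)
    moreover have "y \<in> convex hull {c,d}" using y2 by (simp add: open_segment_def segment_convex_hull)
    ultimately show "\<not> noncrossing {a,b} {c,d}" unfolding noncrossing_def by blast
  qed
qed


lemma tri_sub: "is_triangulation S T \<Longrightarrow> e \<in> T \<Longrightarrow> e \<in> edges_of S"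
  unfolding is_triangulation_def by blast

lemma tri_nc: "is_triangulation S T \<Longrightarrow> e \<in> T \<Longrightarrow> f \<in> T \<Longrightarrow> noncrossing e f"
  unfolding is_triangulation_def by blast

lemma tri_max: "is_triangulation S T \<Longrightarrow> e \<in> edges_of S \<Longrightarrow> e \<notin> T \<Longrightarrow> \<exists>f\<in>T. \<not> noncrossing e f"
  unfolding is_triangulation_def by blast

lemma tri_disj:
  assumes "is_triangulation S T" "{a,b} \<in> T" "{c,d} \<in> T" "{a,b} \<noteq> {c,d}"
  shows "open_segment a b \<inter> open_segment c d = {}"
  using cross_iff[OF tri_sub[OF assms(1,2)] tri_sub[OF assms(1,3)]] tri_nc[OF assms(1,2,3)] assms(4)
  by blast

lemma tri_edgeE:
  assumes "is_triangulation S T" "e \<in> T"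
  obtains a b where "e = {a,b}" "a \<noteq> b" "a \<in> S" "b \<in> S" "closed_segment a b \<inter> S = {a,b}"
  using edgeE[OF tri_sub[OF assms]] by blast


lemma coll_helper:
  assumes ab: "a \<noteq> b" "a \<in> S" "b \<in> S"
    and cdS: "closed_segment c d \<inter> S = {c,d}" "c \<in> S" "d \<in> S"
    and abS: "closed_segment a b \<inter> S = {a,b}"
    and c: "c = pt a b sc" and d: "d = pt a b sd"
    and t: "0 < t" "t < 1" and u: "0 < u" "u < 1" "u = (1-t)* sc + t* sd"
  shows "sc = 0 \<or> sc = 1"
proof -
  consider "0 \<le> sc \<and> sc \<le> 1" | "sc < 0" | "sc > 1" by linarith
  then show ?thesis
  proof cases
    case 1
    then have "c \<in> closed_segment a b" using c pt_closed by blast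
    then have "c = a \<or> c = b" using abS cdS by blast
    then show ?thesis using pt_inj[OF ab(1)] c by (metis pt_0 pt_1)
  next
    case 2
    have sd: "sd > 0"
    proof -
      have "t * sd = u - (1-t)* sc" using u by simp
      moreover have "(1-t)* sc < 0" using 2 t by (simp add: mult_pos_neg)
      ultimately have "t * sd > 0" using u by linarith
      thus ?thesis using t by (simp add: zero_less_mult_iff)
    qed
    define r where "r = sc / (sc - sd)"
    have r: "0 < r" "r < 1" using 2 sd by (auto simp: r_def field_simps)
    have "(1-r)* sc + r* sd = 0" using 2 sd by (simp add: r_def field_simps)
    then have "pt c d r = a" unfolding c d using pt_comb[of r a b sc sd] by (simp add: pt_def)
    then have "a \<in> closed_segment c d" using pt_closed[of r c d] r by simp
    then have "a = c \<or> a = d" using cdS ab by blast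
    then show ?thesis using pt_inj[OF ab(1)] c d 2 sd by (metis less_irrefl pt_0)
  next
    case 3
    have sd: "sd < 1"
    proof -
      have "t * sd = u - (1-t)* sc" using u by simp
      moreover have "(1-t)* sc > (1-t)" using 3 t by simp
      ultimately have "t * sd < t" using u by linarith
      thus ?thesis using t by simp
    qed
    define r where "r = (sc - 1) / (sc - sd)"
    have pos: "sc - sd > 0" using 3 sd by simp
    have nz: "sc - sd \<noteq> 0" using pos by simp
    have r1: "0 < r" unfolding r_def using 3 pos by simp
    have r2: "r < 1" unfolding r_def using pos sd by (simp add: divide_less_eq_1_pos)
    note r = r1 r2
    have rr: "r * (sc - sd) = sc - 1" using nz unfolding r_def by simp
    have "(1-r)* sc + r* sd = 1" using rr by (simp add: algebra_simps)
    then have "pt c d r = b" unfolding c d using pt_comb[of r a b sc sd] by (simp add: pt_def)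
    then have "b \<in> closed_segment c d" using pt_closed[of r c d] r by simp
    then have "b = c \<or> b = d" using cdS ab by blast
    then show ?thesis using pt_inj[OF ab(1)] c d 3 sd by (metis less_irrefl pt_1)
  qed
qed

lemma transversal:
  assumes e: "{a,b} \<in> edges_of S" and f: "{c,d} \<in> edges_of S" and ne: "{a,b} \<noteq> {c,d}"
    and y1: "y \<in> open_segment a b" and y2: "y \<in> open_segment c d"
  shows "ori a b c * ori a b d < 0"
proof -
  have E: "a \<noteq> b" "a \<in> S" "b \<in> S" "closed_segment a b \<inter> S = {a,b}" using e by (simp_all add: edge_iff)
  have F: "c \<noteq> d" "c \<in> S" "d \<in> S" "closed_segment c d \<inter> S = {c,d}" using f by (simp_all add: edge_iff)
  obtain t where t: "0 < t" "t < 1" "y = pt c d t" using y2 by (auto simp: open_seg_pt)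
  obtain u where u: "0 < u" "u < 1" "y = pt a b u" using y1 by (auto simp: open_seg_pt)
  have "ori a b y = 0" using u by (simp add: ori_pt)
  then have lin: "(1-t) * ori a b c + t * ori a b d = 0" using t by (simp add: pt_ori)
  show ?thesis
  proof (rule ccontr)
    assume "\<not> ori a b c * ori a b d < 0"
    then have nn: "ori a b c * ori a b d \<ge> 0" by simp
    have oc: "ori a b c = 0"
    proof (rule ccontr)
      assume h: "ori a b c \<noteq> 0"
      have "ori a b d = - (1-t) * ori a b c / t" using lin t by (simp add: field_simps)
      then have "ori a b c * ori a b d = - (1-t) * (ori a b c)^2 / t" by (simp add: power2_eq_square)
      moreover have "(ori a b c)^2 > 0" using h by simp
      ultimately have "ori a b c * ori a b d < 0" using t by (simp add: divide_neg_pos mult_neg_pos)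
      then show False using nn by simp
    qed
    have od: "ori a b d = 0" using lin oc t by simp
    obtain sc where sc: "c = pt a b sc" using on_line_pt[OF E(1) oc] by blast
    obtain sd where sd: "d = pt a b sd" using on_line_pt[OF E(1) od] by blast
    have "pt a b u = pt a b ((1-t)* sc + t* sd)" using u t sc sd pt_comb[of t a b sc sd] by (simp add: pt_def)
    then have ueq: "u = (1-t)* sc + t* sd" using pt_inj[OF E(1)] by blast
    have h1: "sc = 0 \<or> sc = 1"
      using coll_helper[OF E(1,2,3) F(4,2,3) E(4) sc sd t(1,2) u(1,2) ueq] .
    have ueq2: "u = (1-(1-t))* sd + (1-t)* sc" using ueq by simp
    have cdS': "closed_segment d c \<inter> S = {d,c}" using F(4) by (simp add: closed_segment_commute insert_commute)
    have h2: "sd = 0 \<or> sd = 1"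
      using coll_helper[OF E(1,2,3) cdS' F(3,2) E(4) sd sc _ _ u(1,2) ueq2] t by simp
    have "sc \<noteq> sd" using F(1) sc sd by blast
    then have "{c,d} = {a,b}" using h1 h2 sc sd by auto
    then show False using ne by simp
  qed
qed


lemma exit_aux:
  fixes a b r :: real
  assumes "0 < a" "b < 0" "0 \<le> l" "l \<le> a / (a - b)"
  shows "(1 - l) * a + l * b \<ge> 0"
proof -
  have ab: "a - b > 0" using assms by simp
  have "l * (a - b) \<le> a" using assms(4) ab by (simp add: le_divide_eq)
  thus ?thesis by (simp add: algebra_simps)
qed

lemma exit_aux2:
  fixes a b :: real
  assumes "0 < a" "b < 0"
  shows "(1 - a / (a - b)) * a + (a / (a - b)) * b = 0" "0 < a / (a - b)" "a / (a - b) < 1"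
proof -
  have ab: "a - b > 0" using assms by simp
  define l where "l = a / (a - b)"
  have "l * (a - b) = a" using ab by (simp add: l_def)
  then have h: "l * a - l * b = a" by (simp add: right_diff_distrib)
  have "(1 - l) * a + l * b = a - (l * a - l * b)" by (simp add: algebra_simps)
  then show "(1 - a / (a - b)) * a + (a / (a - b)) * b = 0" using h by (simp add: l_def)
  show "0 < a / (a - b)" using ab assms by simp
  show "a / (a - b) < 1" using ab assms by simp
qed

lemma exit3:
  fixes a1 a2 a3 b1 b2 b3 :: real
  assumes a: "0 < a1" "0 < a2" "0 < a3" and b: "b1 < 0 \<or> b2 < 0 \<or> b3 < 0"
  shows "\<exists>l. 0 < l \<and> l < 1 \<and> (1-l)*a1 + l*b1 \<ge> 0 \<and> (1-l)*a2 + l*b2 \<ge> 0 \<and> (1-l)*a3 + l*b3 \<ge> 0 \<and>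
      ((1-l)*a1 + l*b1 = 0 \<or> (1-l)*a2 + l*b2 = 0 \<or> (1-l)*a3 + l*b3 = 0)"
proof -
  define r where "r = (\<lambda>(a::real) b::real. if b < 0 then a / (a - b) else 2)"
  have rpos: "\<And>a b. 0 < a \<Longrightarrow> 0 < r a b" unfolding r_def using exit_aux2 by auto
  have rlt: "\<And>a b. 0 < a \<Longrightarrow> b < 0 \<Longrightarrow> r a b < 1" unfolding r_def using exit_aux2 by auto
  have rge: "\<And>a b. 0 < a \<Longrightarrow> b \<ge> 0 \<Longrightarrow> r a b = 2" unfolding r_def by auto
  define l where "l = min (r a1 b1) (min (r a2 b2) (r a3 b3))"
  have l0: "0 < l" using rpos a by (simp add: l_def)
  have l1: "l < 1" using b rlt a unfolding l_def by (auto simp: min_less_iff_disj)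
  have ge: "\<And>a b. 0 < a \<Longrightarrow> l \<le> r a b \<Longrightarrow> (1-l)*a + l*b \<ge> 0"
  proof -
    fix a b :: real assume h: "0 < a" "l \<le> r a b"
    show "(1-l)*a + l*b \<ge> 0"
    proof (cases "b < 0")
      case True
      then show ?thesis using exit_aux[OF h(1) True] h l0 by (simp add: r_def)
    next
      case False
      then show ?thesis using h l0 l1 by simp
    qed
  qed
  have eq: "\<And>a b. 0 < a \<Longrightarrow> l = r a b \<Longrightarrow> (1-l)*a + l*b = 0"
  proof -
    fix a b :: real assume h: "0 < a" "l = r a b"
    have "b < 0" using h l1 rge[of a b] by (cases "b < 0") auto
    then show "(1-l)*a + l*b = 0" using exit_aux2[OF h(1)] h by (simp add: r_def)
  qed
  have "l = r a1 b1 \<or> l = r a2 b2 \<or> l = r a3 b3" unfolding l_def by linarith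
  then show ?thesis using ge eq a l0 l1 unfolding l_def[symmetric]
    by (intro exI[of _ l]) (auto simp: l_def)
qed

definition sside :: "point \<Rightarrow> point \<Rightarrow> point \<Rightarrow> point \<Rightarrow> bool" where
  "sside a b x y \<longleftrightarrow> ori a b x * ori a b y > 0"

definition dotp :: "point \<Rightarrow> point \<Rightarrow> point \<Rightarrow> real" where
  "dotp p0 u y = (fst u - fst p0) * (fst y - fst p0) + (snd u - snd p0) * (snd y - snd p0)"

definition kap :: "point \<Rightarrow> point \<Rightarrow> point \<Rightarrow> real" where
  "kap p0 u y = dotp p0 u y / \<bar>ori p0 u y\<bar>"

lemma lagrange: "ori p0 y2 y1 * ((fst u - fst p0)^2 + (snd u - snd p0)^2) =
   dotp p0 u y2 * ori p0 u y1 - ori p0 u y2 * dotp p0 u y1"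
  by (simp add: ori_def dotp_def power2_eq_square algebra_simps)

lemma kap_iff:
  assumes ou: "p0 \<noteq> u" and same: "ori p0 u y1 * ori p0 u y2 > 0"
  shows "sside p0 y2 u y1 \<longleftrightarrow> kap p0 u y2 < kap p0 u y1"
proof -
  define N where "N = (fst u - fst p0)^2 + (snd u - snd p0)^2"
  have N: "N > 0" using ou unfolding N_def
    by (auto simp: prod_eq_iff sum_power2_gt_zero_iff)
  define a1 where "a1 = dotp p0 u y1"
  define a2 where "a2 = dotp p0 u y2"
  define b1 where "b1 = ori p0 u y1"
  define b2 where "b2 = ori p0 u y2"
  have L: "ori p0 y2 y1 * N = a2 * b1 - b2 * a1" unfolding N_def a1_def a2_def b1_def b2_def by (rule lagrange)
  have u2: "ori p0 y2 u = - b2" unfolding b2_def by (simp add: ori_def algebra_simps)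
  have s: "sside p0 y2 u y1 \<longleftrightarrow> - b2 * ori p0 y2 y1 > 0" unfolding sside_def u2 ..
  also have "\<dots> \<longleftrightarrow> - b2 * (ori p0 y2 y1 * N) > 0" using N
    by (metis mult.assoc mult_pos_pos zero_less_mult_pos2 mult.commute)
  also have "\<dots> \<longleftrightarrow> b2 * (b2 * a1 - a2 * b1) > 0" unfolding L by (simp add: algebra_simps)
  finally have s2: "sside p0 y2 u y1 \<longleftrightarrow> b2 * (b2 * a1 - a2 * b1) > 0" .
  have bb: "b1 * b2 > 0" using same unfolding b1_def b2_def by simp
  show ?thesis
  proof (cases "b1 > 0")
    case True
    then have b2p: "b2 > 0" using bb by (simp add: zero_less_mult_iff)
    have k: "kap p0 u y1 = a1 / b1" "kap p0 u y2 = a2 / b2"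
      using True b2p unfolding kap_def a1_def b1_def a2_def b2_def by auto
    have "b2 * (b2 * a1 - a2 * b1) > 0 \<longleftrightarrow> b2 * a1 - a2 * b1 > 0" using b2p by (simp add: zero_less_mult_iff)
    also have "\<dots> \<longleftrightarrow> a2 / b2 < a1 / b1" using True b2p by (simp add: divide_less_eq less_divide_eq algebra_simps)
    finally show ?thesis using s2 k by simp
  next
    case False
    then have b1n: "b1 < 0" using bb by (cases "b1 = 0") auto
    then have b2n: "b2 < 0" using bb by (simp add: zero_less_mult_iff)
    have k: "kap p0 u y1 = a1 / (- b1)" "kap p0 u y2 = a2 / (- b2)"
      using b1n b2n unfolding kap_def a1_def b1_def a2_def b2_def by auto
    have "b2 * (b2 * a1 - a2 * b1) > 0 \<longleftrightarrow> b2 * a1 - a2 * b1 < 0" using b2n by (simp add: zero_less_mult_iff)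
    also have "\<dots> \<longleftrightarrow> a2 / (- b2) < a1 / (- b1)" using b1n b2n by (simp add: divide_less_eq less_divide_eq algebra_simps)
    finally show ?thesis using s2 k by simp
  qed
qed


lemma ori_nd_rot: "ori a b c \<noteq> 0 \<Longrightarrow> ori b c a \<noteq> 0 \<and> ori c a b \<noteq> 0"
  by (metis ori_rot)

lemma bar_zero_seg:
  assumes nd: "ori a b c \<noteq> 0" and w: "w \<in> convex hull {a,b,c}" and z: "bar c a b w = 0"
  shows "w \<in> closed_segment a b"
proof -
  have h: "bar a b c w \<ge> 0" "bar b c a w \<ge> 0" using w hull3_iff[OF nd] by auto
  have s: "bar a b c w + bar b c a w = 1" using bar_sum[OF nd, of w] z by simp
  have "w = bar a b c w *\<^sub>R a + bar b c a w *\<^sub>R b" using bar_cramer[OF nd, of w] z by simp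
  also have "\<dots> = (1 - bar b c a w) *\<^sub>R a + bar b c a w *\<^sub>R b"
    using s by (metis add_diff_cancel_right')
  finally show ?thesis unfolding in_segment using h s by auto
qed

lemma ori_decomp:
  assumes nd: "ori a b c \<noteq> 0"
  shows "ori a z w = bar b c a z * ori a b w + bar c a b z * ori a c w"
proof -
  have z: "z = bar a b c z *\<^sub>R a + bar b c a z *\<^sub>R b + bar c a b z *\<^sub>R c" by (rule bar_cramer[OF nd])
  have s: "bar a b c z + bar b c a z + bar c a b z = 1" by (rule bar_sum[OF nd])
  have "ori a z w = ori w a z" by (metis ori_rot)
  also have "\<dots> = bar a b c z * ori w a a + bar b c a z * ori w a b + bar c a b z * ori w a c"
    by (subst z, rule ori_comb3[OF s])
  also have "\<dots> = bar b c a z * ori a b w + bar c a b z * ori a c w" by (simp add: ori_rot[of w a])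
  finally show ?thesis .
qed

lemma open_seg_shrink:
  fixes y e1 e2 :: point
  assumes y: "y \<in> open_segment e1 e2" and l: "0 < l" "l < 1"
  shows "(1 - l) *\<^sub>R y + l *\<^sub>R e1 \<in> open_segment e1 e2"
proof -
  obtain s where s: "e1 \<noteq> e2" "0 < s" "s < 1" "y = pt e1 e2 s" using y by (auto simp: open_seg_pt)
  have "(1 - l) *\<^sub>R y + l *\<^sub>R e1 = pt e1 e2 ((1-l) * s + l * 0)"
    using s(4) pt_comb[of l e1 e2 s 0] by simp
  moreover have "0 < (1-l) * s + l * 0" "(1-l) * s + l * 0 < 1" using s l
    by (simp_all add: mult_pos_pos) (smt (verit) mult_left_le_one_le)
  ultimately show ?thesis using s(1) by (auto simp: open_seg_pt)
qed

lemma open_seg_ori0: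
  fixes y e1 e2 :: point
  assumes "y \<in> open_segment e1 e2" "ori a b e1 = 0" "ori a b e2 = 0"
  shows "ori a b y = 0"
  using assms by (auto simp: open_seg_pt pt_ori)


lemma fan:
  fixes x0 u v z :: point
  assumes tri: "is_triangulation S T" and x0S: "x0 \<in> S" and nd: "ori x0 u v \<noteq> 0" and vS: "v \<in> S"
   and s1: "open_segment x0 u \<inter> S = {}"
   and s1T: "\<And>g1 g2. {g1,g2} \<in> T \<Longrightarrow> open_segment g1 g2 \<inter> open_segment x0 u \<noteq> {} \<Longrightarrow> ori x0 u g1 = 0 \<and> ori x0 u g2 = 0"
   and s2: "open_segment u v \<inter> S = {}"
   and s2T: "\<And>g1 g2. {g1,g2} \<in> T \<Longrightarrow> open_segment g1 g2 \<inter> open_segment u v \<noteq> {} \<Longrightarrow> ori u v g1 = 0 \<and> ori u v g2 = 0"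
   and uT: "\<And>g1 g2. u \<notin> S \<Longrightarrow> {g1,g2} \<in> T \<Longrightarrow> u \<in> open_segment g1 g2 \<Longrightarrow> ori u v g1 = 0 \<and> ori u v g2 = 0"
   and zS: "z \<in> S" and zh: "z \<in> convex hull {x0,u,v}" and zx: "z \<noteq> x0" and zu: "z \<noteq> u"
   and zmin: "\<And>y. y \<in> S \<Longrightarrow> y \<in> convex hull {x0,u,v} \<Longrightarrow> y \<noteq> x0 \<Longrightarrow> y \<noteq> u \<Longrightarrow> \<not> sside x0 z u y"
   and znear: "\<And>y. y \<in> S \<Longrightarrow> y \<in> convex hull {x0,u,v} \<Longrightarrow> y \<notin> open_segment x0 z"
  shows "{x0,z} \<in> T \<or> (u \<in> S \<and> (\<exists>c. {u,c} \<in> T \<and> open_segment u c \<inter> open_segment x0 z \<noteq> {}))"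
proof -
  define Bo where "Bo = bar x0 u v"
  define Bu where "Bu = bar u v x0"
  define Bv where "Bv = bar v x0 u"
  have nd2: "ori u v x0 \<noteq> 0" "ori v x0 u \<noteq> 0" using ori_nd_rot[OF nd] by auto
  have hull_iff: "\<And>w. w \<in> convex hull {x0,u,v} \<longleftrightarrow> Bo w \<ge> 0 \<and> Bu w \<ge> 0 \<and> Bv w \<ge> 0"
    unfolding Bo_def Bu_def Bv_def by (rule hull3_iff[OF nd])
  have hullperm: "convex hull {x0,u,v} = convex hull {u,v,x0}" by (simp add: insert_commute)
  have Bo_x0: "Bo x0 = 1" unfolding Bo_def using bar_vert[OF nd] .
  have Bv_x0: "Bv x0 = 0" "Bu x0 = 0" "Bv u = 0" "Bu u = 1"
    unfolding Bv_def Bu_def using bar_vert[OF nd2(1)] by simp_all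
  have zb: "Bo z \<ge> 0" "Bu z \<ge> 0" "Bv z \<ge> 0" using zh hull_iff by auto
  have Bvz: "Bv z > 0"
  proof (rule ccontr)
    assume "\<not> Bv z > 0"
    then have "Bv z = 0" using zb by simp
    then have "z \<in> closed_segment x0 u" using bar_zero_seg[OF nd zh] unfolding Bv_def by simp
    then have "z \<in> open_segment x0 u" using zx zu by (simp add: open_segment_def)
    then show False using s1 zS by blast
  qed
  have cs: "closed_segment x0 z \<subseteq> convex hull {x0,u,v}"
    by (rule closed_segment_subset) (auto intro: hull_inc zh)
  have edge: "{x0,z} \<in> edges_of S"
  proof (rule edge_I[OF zx[symmetric] x0S zS])
    show "open_segment x0 z \<inter> S = {}"
    proof (rule ccontr)
      assume "open_segment x0 z \<inter> S \<noteq> {}"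
      then obtain y where y: "y \<in> open_segment x0 z" "y \<in> S" by blast
      have "y \<in> convex hull {x0,u,v}" using y(1) cs open_closed_segment by blast
      then show False using znear y by blast
    qed
  qed
  show ?thesis
  proof (cases "{x0,z} \<in> T")
    case True then show ?thesis by simp
  next
    case False
    obtain g where gT: "g \<in> T" and gc: "\<not> noncrossing {x0,z} g" using tri_max[OF tri edge False] by blast
    obtain g1 g2 where g: "g = {g1,g2}" "g1 \<noteq> g2" "g1 \<in> S" "g2 \<in> S" using tri_edgeE[OF tri gT] by metis
    have gedge: "{g1,g2} \<in> edges_of S" using tri_sub[OF tri gT] g by simp
    have cr: "{x0,z} \<noteq> {g1,g2} \<and> open_segment x0 z \<inter> open_segment g1 g2 \<noteq> {}"
      using cross_iff[OF edge gedge] gc g by simp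
    then obtain y where y1: "y \<in> open_segment x0 z" and y2: "y \<in> open_segment g1 g2" by blast
    have tr: "ori x0 z g1 * ori x0 z g2 < 0" using transversal[OF edge gedge _ y1 y2] cr by blast
    have zdec: "\<And>w. ori x0 z w = Bu z * ori x0 u w + Bv z * ori x0 v w"
      unfolding Bu_def Bv_def by (rule ori_decomp[OF nd])
    have ozu: "ori x0 z u = - Bv z * ori x0 u v"
      using zdec[of u] by (simp add: ori_swap2[of x0 v u])
    have ozu0: "ori x0 z u \<noteq> 0" using ozu Bvz nd by simp
    obtain e1 e2 where e: "{e1,e2} = {g1,g2}" and e1s: "ori x0 z u * ori x0 z e1 > 0"
        and e2s: "ori x0 z e2 * ori x0 z u < 0"
    proof (cases "ori x0 z u * ori x0 z g1 > 0")
      case True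
      have "ori x0 z g2 * ori x0 z u < 0"
      proof -
        have eq: "(ori x0 z u * ori x0 z g1) * (ori x0 z g2 * ori x0 z u) = (ori x0 z g1 * ori x0 z g2) * (ori x0 z u)^2"
          by (simp add: power2_eq_square algebra_simps)
        have bn: "(ori x0 z g1 * ori x0 z g2) * (ori x0 z u)^2 < 0" using tr ozu0 by (simp add: mult_neg_pos)
        have neg: "(ori x0 z u * ori x0 z g1) * (ori x0 z g2 * ori x0 z u) < 0" by (subst eq) (rule bn)
        show ?thesis
        proof (rule ccontr)
          assume "\<not> ori x0 z g2 * ori x0 z u < 0"
          then have "ori x0 z g2 * ori x0 z u \<ge> 0" by simp
          then have "(ori x0 z u * ori x0 z g1) * (ori x0 z g2 * ori x0 z u) \<ge> 0" using True by simp
          then show False using neg by simp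
        qed
      qed
      then show ?thesis using that[of g1 g2] True by simp
    next
      case False
      have "ori x0 z u * ori x0 z g2 > 0"
      proof -
        have eq: "(ori x0 z u * ori x0 z g1) * (ori x0 z u * ori x0 z g2) = (ori x0 z g1 * ori x0 z g2) * (ori x0 z u)^2"
          by (simp add: power2_eq_square algebra_simps)
        have bn: "(ori x0 z g1 * ori x0 z g2) * (ori x0 z u)^2 < 0" using tr ozu0 by (simp add: mult_neg_pos)
        have neg: "(ori x0 z u * ori x0 z g1) * (ori x0 z u * ori x0 z g2) < 0" by (subst eq) (rule bn)
        show ?thesis
        proof (rule ccontr)
          assume "\<not> ori x0 z u * ori x0 z g2 > 0"
          then have h2: "ori x0 z u * ori x0 z g2 \<le> 0" by simp
          have h1: "ori x0 z u * ori x0 z g1 \<le> 0" using False by simp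
          from h1 h2 have "(ori x0 z u * ori x0 z g1) * (ori x0 z u * ori x0 z g2) \<ge> 0"
            by (rule mult_nonpos_nonpos)
          then show False using neg by simp
        qed
      qed
      moreover have "ori x0 z g1 * ori x0 z u < 0"
      proof -
        have "ori x0 z g1 \<noteq> 0" using tr by auto
        then have nz: "ori x0 z u * ori x0 z g1 \<noteq> 0" using ozu0 by simp
        have "ori x0 z u * ori x0 z g1 < 0" using False nz by linarith
        then show ?thesis by (simp add: mult.commute)
      qed
      ultimately show ?thesis using that[of g2 g1] by (simp add: insert_commute)
    qed
    have eT: "{e1,e2} \<in> T" using gT g e by simp
    have eS: "e1 \<in> S" "e2 \<in> S" using e g by auto
    have eedge: "{e1,e2} \<in> edges_of S" using tri_sub[OF tri eT] .
    have y2': "y \<in> open_segment e1 e2" using y2 e by (metis doubleton_eq_iff open_segment_commute)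
    have yS: "y \<notin> S" using edge_open_free[OF eedge] y2' by blast
    obtain ty where ty: "0 < ty" "ty < 1" "y = pt x0 z ty" using y1 by (auto simp: open_seg_pt)
    have Boy: "Bo y > 0"
    proof -
      have "Bo y = (1 - ty) * Bo x0 + ty * Bo z" unfolding ty(3) pt_def Bo_def by (rule bar_comb)
      moreover have "ty * Bo z \<ge> 0" using ty zb by simp
      ultimately show ?thesis using Bo_x0 ty by simp
    qed
    have Bvy: "Bv y > 0"
    proof -
      have "Bv y = (1 - ty) * Bv x0 + ty * Bv z" unfolding ty(3) pt_def Bv_def by (rule bar_comb)
      then show ?thesis using Bv_x0 ty Bvz by simp
    qed
    define Dn where "Dn = (\<lambda>w. ori x0 z w / ori x0 z u)"
    have Dny: "Dn y = 0" unfolding Dn_def ty(3) by (simp add: ori_pt)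
    have Dne1: "Dn e1 > 0" unfolding Dn_def using e1s
      by (auto simp: zero_less_divide_iff zero_less_mult_iff)
    have Dnx0: "Dn x0 = 0" unfolding Dn_def by simp
    have Bu_id: "\<And>w. Bu w = Dn w + (Bu z / Bv z) * Bv w"
    proof -
      fix w
      have D: "ori x0 u v \<noteq> 0" by (rule nd)
      have bv: "ori x0 u w = Bv w * ori x0 u v" unfolding Bv_def bar_def using nd2 D
        by (simp add: ori_rot[of v x0 u] ori_rot[of v x0 w] ori_rot[of x0 u w])
      have bu: "ori x0 v w = - Bu w * ori x0 u v"
      proof -
        have r1: "ori v x0 w = - ori x0 v w" "ori v x0 u = ori x0 u v" by (simp_all add: ori_def algebra_simps)
        show ?thesis unfolding Bu_def bar_def r1 using D by simp
      qed

      have "Dn w = (Bu z * ori x0 u w + Bv z * ori x0 v w) / (- Bv z * ori x0 u v)"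
        unfolding Dn_def zdec[of w] ozu ..
      also have "\<dots> = ((Bu z * Bv w - Bv z * Bu w) * ori x0 u v) / ((- Bv z) * ori x0 u v)"
        unfolding bv bu by (simp add: algebra_simps)
      also have "\<dots> = (Bu z * Bv w - Bv z * Bu w) / (- Bv z)"
        using D by (rule nonzero_mult_divide_mult_cancel_right)
      finally show "Bu w = Dn w + (Bu z / Bv z) * Bv w" using Bvz by (simp add: field_simps)
    qed
    show ?thesis
    proof (cases "e1 \<in> convex hull {x0,u,v}")
      case True
      have e1x: "e1 \<noteq> x0" using Dne1 Dnx0 by auto
      show ?thesis
      proof (cases "e1 = u")
        case True
        have "{u,e2} \<in> T" using eT True by simp
        moreover have "y \<in> open_segment u e2" using y2' True by simp
        ultimately show ?thesis using y1 eS True by blast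
      next
        case False
        have "\<not> sside x0 z u e1" using zmin[OF eS(1) \<open>e1 \<in> convex hull {x0,u,v}\<close> e1x False] .
        then show ?thesis using e1s unfolding sside_def by simp
      qed
    next
      case False
      have neg: "Bo e1 < 0 \<or> Bv e1 < 0"
      proof (rule ccontr)
        assume "\<not> (Bo e1 < 0 \<or> Bv e1 < 0)"
        then have "Bo e1 \<ge> 0" "Bv e1 \<ge> 0" by auto
        moreover have "Bu e1 \<ge> 0"
        proof -
          have "Bu z / Bv z \<ge> 0" using zb Bvz by simp
          then have "(Bu z / Bv z) * Bv e1 \<ge> 0" using \<open>Bv e1 \<ge> 0\<close> by (rule mult_nonneg_nonneg)
          then show ?thesis using Bu_id[of e1] Dne1 by simp
        qed
        ultimately show False using False hull_iff by auto
      qed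
      obtain l where l: "0 < l" "l < 1" "(1-l) * Bo y + l * Bo e1 \<ge> 0" "(1-l) * Bv y + l * Bv e1 \<ge> 0"
          and l0: "(1-l) * Bo y + l * Bo e1 = 0 \<or> (1-l) * Bv y + l * Bv e1 = 0"
        using exit3[of "Bo y" "Bv y" 1 "Bo e1" "Bv e1" 1] Boy Bvy neg by auto
      define w where "w = (1 - l) *\<^sub>R y + l *\<^sub>R e1"
      have Bow: "Bo w = (1-l) * Bo y + l * Bo e1" unfolding w_def Bo_def by (rule bar_comb)
      have Bvw: "Bv w = (1-l) * Bv y + l * Bv e1" unfolding w_def Bv_def by (rule bar_comb)
      have Dnw: "Dn w = l * Dn e1" unfolding w_def Dn_def using Dny unfolding Dn_def
        by (simp add: ori_comb add_divide_distrib)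
      have Dnw0: "Dn w > 0" using Dnw l Dne1 by simp
      have Buw: "Bu w \<ge> 0"
      proof -
        have "Bu z / Bv z \<ge> 0" using zb Bvz by simp
        moreover have "Bv w \<ge> 0" using Bvw l by simp
        ultimately have "(Bu z / Bv z) * Bv w \<ge> 0" by (rule mult_nonneg_nonneg)
        then show ?thesis using Bu_id[of w] Dnw0 by simp
      qed
      have wh: "w \<in> convex hull {x0,u,v}" using hull_iff Bow Bvw l Buw by auto
      have wo: "w \<in> open_segment e1 e2" unfolding w_def by (rule open_seg_shrink[OF y2' l(1,2)])
      have wS: "w \<notin> S" using edge_open_free[OF eedge] wo by blast
      have wx0: "w \<noteq> x0" using Dnw0 Dnx0 by auto
      have wu: "w = u \<Longrightarrow> False"
      proof -
        assume wu: "w = u"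
        then have "u \<notin> S" using wS by simp
        then have "ori u v e1 = 0 \<and> ori u v e2 = 0" using uT[OF _ eT] wo wu by blast
        then have "ori u v y = 0" using open_seg_ori0[OF y2'] by blast
        then have "Bo y = 0" unfolding Bo_def bar_def by simp
        then show False using Boy by simp
      qed
      from l0 show ?thesis
      proof
        assume "(1-l) * Bo y + l * Bo e1 = 0"
        then have "Bo w = 0" using Bow by simp
        then have "w \<in> closed_segment u v"
          using bar_zero_seg[OF nd2(1), of w] wh hullperm unfolding Bo_def by simp
        moreover have "w \<noteq> v" using wS vS by auto
        ultimately have "w \<in> open_segment u v" using wu by (auto simp: open_segment_def)
        then have "ori u v e1 = 0 \<and> ori u v e2 = 0" using s2T[OF eT] wo by blast
        then have "ori u v y = 0" using open_seg_ori0[OF y2'] by blast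
        then have "Bo y = 0" unfolding Bo_def bar_def by simp
        then show ?thesis using Boy by simp
      next
        assume "(1-l) * Bv y + l * Bv e1 = 0"
        then have "Bv w = 0" using Bvw by simp
        then have "w \<in> closed_segment x0 u"
          using bar_zero_seg[OF nd, of w] wh unfolding Bv_def by simp
        then have "w \<in> open_segment x0 u" using wu wx0 by (auto simp: open_segment_def)
        then have "ori x0 u e1 = 0 \<and> ori x0 u e2 = 0" using s1T[OF eT] wo by blast
        then have "ori x0 u y = 0" using open_seg_ori0[OF y2'] by blast
        then have "Bv y = 0" unfolding Bv_def bar_def by simp
        then show ?thesis using Bvy by simp
      qed
    qed
  qed
qed


lemma ori_bary:
  assumes nd: "ori a b c \<noteq> 0"
  shows "ori x y w = bar a b c w * ori x y a + bar b c a w * ori x y b + bar c a b w * ori x y c"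
proof -
  have w: "w = bar a b c w *\<^sub>R a + bar b c a w *\<^sub>R b + bar c a b w *\<^sub>R c" by (rule bar_cramer[OF nd])
  have s: "bar a b c w + bar b c a w + bar c a b w = 1" by (rule bar_sum[OF nd])
  show ?thesis by (subst w, rule ori_comb3[OF s])
qed

lemma sside_same: "sside a b v y1 \<Longrightarrow> sside a b v y2 \<Longrightarrow> ori a b y1 * ori a b y2 > 0"
  unfolding sside_def by (auto simp: zero_less_mult_iff)

lemma pt_scale_ori: "ori x0 u (pt x0 z t) = t * ori x0 u z"
  by (simp add: pt_ori)

lemma pt_scale_dotp: "dotp x0 u (pt x0 z t) = t * dotp x0 u z"
  by (simp add: pt_def dotp_def algebra_simps)

lemma pt_dist: "0 \<le> t \<Longrightarrow> dist x0 (pt x0 z t) = t * dist x0 z"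
proof -
  assume t: "0 \<le> t"
  have "pt x0 z t - x0 = t *\<^sub>R (z - x0)" by (simp add: pt_def algebra_simps)
  have "dist x0 (pt x0 z t) = norm (pt x0 z t - x0)" by (simp add: dist_norm norm_minus_commute)
  also have "\<dots> = norm (t *\<^sub>R (z - x0))" using \<open>pt x0 z t - x0 = t *\<^sub>R (z - x0)\<close> by simp
  also have "\<dots> = t * norm (z - x0)" using t by simp
  also have "\<dots> = t * dist x0 z" by (simp add: dist_norm norm_minus_commute)
  finally show ?thesis .
qed

lemma ex_first:
  assumes fin: "finite K" and ne: "K \<noteq> {}" and xu: "x0 \<noteq> u"
    and side: "\<And>y. y \<in> K \<Longrightarrow> sside x0 u v y"
  shows "\<exists>z\<in>K. (\<forall>y\<in>K. \<not> sside x0 z u y) \<and> (\<forall>y\<in>K. y \<notin> open_segment x0 z)"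
proof -
  define M where "M = Max (kap x0 u ` K)"
  have M: "\<And>y. y \<in> K \<Longrightarrow> kap x0 u y \<le> M" unfolding M_def using fin by simp
  have MK: "M \<in> kap x0 u ` K" unfolding M_def using fin ne by simp
  define K' where "K' = {y \<in> K. kap x0 u y = M}"
  have K'ne: "K' \<noteq> {}" using MK K'_def by auto
  have K'fin: "finite K'" using fin K'_def by simp
  define z where "z = arg_min_on (dist x0) K'"
  have zK': "z \<in> K'" unfolding z_def using arg_min_if_finite(1)[OF K'fin K'ne] .
  have zmin: "\<And>y. y \<in> K' \<Longrightarrow> dist x0 z \<le> dist x0 y"
    unfolding z_def using arg_min_if_finite(2)[OF K'fin K'ne] by (meson not_le)
  have zK: "z \<in> K" and zM: "kap x0 u z = M" using zK' K'_def by auto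
  show ?thesis
  proof (intro bexI[OF _ zK] conjI ballI)
    fix y assume yK: "y \<in> K"
    show "\<not> sside x0 z u y"
    proof
      assume "sside x0 z u y"
      moreover have "ori x0 u y * ori x0 u z > 0" using sside_same[OF side[OF yK] side[OF zK]] .
      ultimately have "kap x0 u z < kap x0 u y" using kap_iff[OF xu] by blast
      then show False using M[OF yK] zM by simp
    qed
  next
    fix y assume yK: "y \<in> K"
    show "y \<notin> open_segment x0 z"
    proof
      assume "y \<in> open_segment x0 z"
      then obtain t where t: "0 < t" "t < 1" "y = pt x0 z t" and xz: "x0 \<noteq> z" by (auto simp: open_seg_pt)
      have "kap x0 u y = kap x0 u z" using t
        by (simp add: kap_def pt_scale_ori pt_scale_dotp abs_mult)
      then have "y \<in> K'" using yK zM K'_def by simp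
      then have "dist x0 z \<le> dist x0 y" by (rule zmin)
      moreover have "dist x0 y = t * dist x0 z" using t pt_dist by simp
      moreover have "dist x0 z > 0" using xz by simp
      ultimately show False using t by (simp add: mult_less_cancel_right1)
    qed
  qed
qed

lemma two_lines:
  assumes ab: "a \<noteq> b" and "ori a b x = 0" "ori a b y = 0" "ori c d x = 0" "ori c d y = 0" "x \<noteq> y"
  shows "ori c d a = 0"
proof -
  obtain sx where sx: "x = pt a b sx" using on_line_pt[OF ab assms(2)] by blast
  obtain sy where sy: "y = pt a b sy" using on_line_pt[OF ab assms(3)] by blast
  have ne: "sx \<noteq> sy" using sx sy assms(6) by blast
  have e1: "(1 - sx) * ori c d a + sx * ori c d b = 0" using assms(4) sx by (simp add: pt_ori)
  have e2: "(1 - sy) * ori c d a + sy * ori c d b = 0" using assms(5) sy by (simp add: pt_ori)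
  have "(sy - sx) * (ori c d b - ori c d a) = 0" using e1 e2 by (simp add: algebra_simps)
  then have "ori c d b = ori c d a" using ne by simp
  then show ?thesis using e1 by (simp add: algebra_simps)
qed

lemma open_sub_left:
  fixes x a b :: point
  assumes "x \<in> open_segment a b"
  shows "open_segment x b \<subseteq> open_segment a b"
proof
  fix w assume w: "w \<in> open_segment x b"
  obtain r where r: "a \<noteq> b" "0 < r" "r < 1" "x = pt a b r" using assms by (auto simp: open_seg_pt)
  obtain t where t: "x \<noteq> b" "0 < t" "t < 1" "w = pt x b t" using w by (auto simp: open_seg_pt)
  have "w = pt a b ((1 - t) * r + t * 1)" using t(4) r(4) pt_comb[of t a b r 1] by (simp add: pt_def)
  moreover have "0 < (1 - t) * r + t * 1" using r t by (simp add: add_pos_nonneg)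
  moreover have "(1 - t) * r + t * 1 < 1"
  proof -
    have "(1 - t) * r < (1 - t) * 1" using r t by (simp add: mult_strict_left_mono)
    then show ?thesis by simp
  qed
  ultimately show "w \<in> open_segment a b" using r(1) by (auto simp: open_seg_pt)
qed

lemma open_sub_right:
  fixes x a b :: point
  assumes "x \<in> open_segment a b"
  shows "open_segment x a \<subseteq> open_segment a b"
  using open_sub_left[of x b a] assms by (simp add: open_segment_commute)

lemma seg_coll: "x \<in> open_segment a b \<Longrightarrow> ori x a b = 0 \<and> ori x b a = 0 \<and> ori a x b = 0 \<and> ori b x a = 0 \<and> ori a b x = 0 \<and> ori b a x = 0"
proof -
  assume "x \<in> open_segment a b"
  then have h: "ori a b x = 0" using seg_ori open_closed_segment by blast
  have "ori x a b = ori a b x" "ori x b a = - ori a b x" "ori a x b = - ori a b x" "ori b x a = ori a b x"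
       "ori b a x = - ori a b x" by (simp_all add: ori_def algebra_simps)
  then show ?thesis using h by simp
qed


lemma tri_finite: "finite S \<Longrightarrow> is_triangulation S T \<Longrightarrow> finite T"
proof -
  assume f: "finite S" and t: "is_triangulation S T"
  have "T \<subseteq> Pow S" using t unfolding is_triangulation_def edges_of_def by auto
  then show "finite T" using f by (meson finite_Pow_iff finite_subset)
qed

lemma cross_param_unique:
  assumes e: "{a,b} \<in> edges_of S" and f: "{c,d} \<in> edges_of S" and ne: "{a,b} \<noteq> {c,d}"
    and t1: "0 < t1" "t1 < 1" "pt a b t1 \<in> open_segment c d"
    and t2: "0 < t2" "t2 < 1" "pt a b t2 \<in> open_segment c d"
  shows "t1 = t2"
proof -
  have ab: "a \<noteq> b" using e by (simp add: edge_iff)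
  have "pt a b t1 \<in> open_segment a b" using ab t1 by (auto simp: open_seg_pt)
  then have tr: "ori a b c * ori a b d < 0" using transversal[OF e f ne _ t1(3)] by blast
  obtain r1 where r1: "pt a b t1 = pt c d r1" using t1(3) by (auto simp: open_seg_pt)
  obtain r2 where r2: "pt a b t2 = pt c d r2" using t2(3) by (auto simp: open_seg_pt)
  have z1: "(1 - r1) * ori a b c + r1 * ori a b d = 0" using r1 ori_pt[of a b t1] by (simp add: pt_ori)
  have z2: "(1 - r2) * ori a b c + r2 * ori a b d = 0" using r2 ori_pt[of a b t2] by (simp add: pt_ori)
  have "(r1 - r2) * (ori a b d - ori a b c) = 0" using z1 z2 by (simp add: algebra_simps)
  moreover have "ori a b d - ori a b c \<noteq> 0" using tr by auto
  ultimately have "r1 = r2" by simp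
  then have "pt a b t1 = pt a b t2" using r1 r2 by simp
  then show ?thesis using pt_inj[OF ab] by blast
qed

lemma sside_refl: "ori a b s \<noteq> 0 \<Longrightarrow> sside a b s s"
  unfolding sside_def by (cases "ori a b s > 0") (auto simp: mult_neg_neg)

lemma nbr_exists:
  assumes fin: "finite S" and tri: "is_triangulation S T" and pq: "{p,q} \<in> T"
    and sS: "s \<in> S" and nz: "ori p q s \<noteq> 0"
  shows "\<exists>z\<in>S. sside p q s z \<and> {p,z} \<in> T"
proof -
  have pqE: "p \<noteq> q" "p \<in> S" "q \<in> S" "closed_segment p q \<inter> S = {p,q}"
    using tri_sub[OF tri pq] by (simp_all add: edge_iff)
  define H where "H = {y\<in>S. sside p q s y}"
  have sH: "s \<in> H" using sS nz sside_refl H_def by auto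
  have Hfin: "finite H" using fin H_def by simp
  have Hne: "H \<noteq> {}" using sH by auto
  define y0 where "y0 = arg_min_on (\<lambda>y. \<bar>ori p q y\<bar>) H"
  have y0H: "y0 \<in> H" unfolding y0_def using arg_min_if_finite(1)[OF Hfin Hne] .
  have y0min: "\<And>y. y \<in> H \<Longrightarrow> \<bar>ori p q y0\<bar> \<le> \<bar>ori p q y\<bar>"
    unfolding y0_def using arg_min_if_finite(2)[OF Hfin Hne] by (meson not_le)
  have y0S: "y0 \<in> S" and y0s: "sside p q s y0" using y0H H_def by auto
  have oy0: "ori p q y0 \<noteq> 0" using y0s unfolding sside_def by auto
  have py0: "p \<noteq> y0" using oy0 by auto
  have free: "open_segment p y0 \<inter> S = {}"
  proof (rule ccontr)
    assume "open_segment p y0 \<inter> S \<noteq> {}"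
    then obtain y where y: "y \<in> open_segment p y0" "y \<in> S" by blast
    obtain t where t: "0 < t" "t < 1" "y = pt p y0 t" using y(1) by (auto simp: open_seg_pt)
    have oy: "ori p q y = t * ori p q y0" using t(3) pt_scale_ori by simp
    have "sside p q s y" using y0s t oy unfolding sside_def
      by (simp add: mult.left_commute zero_less_mult_iff)
    then have "y \<in> H" using y H_def by simp
    then have h1: "\<bar>ori p q y0\<bar> \<le> \<bar>ori p q y\<bar>" by (rule y0min)
    have "\<bar>ori p q y\<bar> = t * \<bar>ori p q y0\<bar>" using oy t by (simp add: abs_mult)
    then have "\<bar>ori p q y0\<bar> \<le> t * \<bar>ori p q y0\<bar>" using h1 by simp
    moreover have "t * \<bar>ori p q y0\<bar> < \<bar>ori p q y0\<bar>" using t oy0 by simp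
    ultimately show False by simp
  qed
  have edge0: "{p,y0} \<in> edges_of S" using edge_I[OF py0 pqE(2) y0S free] .
  show ?thesis
  proof (cases "{p,y0} \<in> T")
    case True then show ?thesis using y0S y0s by blast
  next
    case False
    define X where "X = {t. 0 < t \<and> t < 1 \<and> (\<exists>g1 g2. {g1,g2} \<in> T \<and> pt p y0 t \<in> open_segment g1 g2)}"
    have Xne: "X \<noteq> {}"
    proof -
      obtain g where gT: "g \<in> T" and gc: "\<not> noncrossing {p,y0} g" using tri_max[OF tri edge0 False] by blast
      obtain g1 g2 where g: "g = {g1,g2}" using tri_edgeE[OF tri gT] by metis
      have "{p,y0} \<noteq> {g1,g2} \<and> open_segment p y0 \<inter> open_segment g1 g2 \<noteq> {}"
        using cross_iff[OF edge0 tri_sub[OF tri gT[unfolded g]]] gc g by simp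
      then obtain y where y: "y \<in> open_segment p y0" "y \<in> open_segment g1 g2" by blast
      obtain t where t: "0 < t" "t < 1" "y = pt p y0 t" using y(1) by (auto simp: open_seg_pt)
      have "t \<in> X" unfolding X_def using t y gT g by blast
      then show ?thesis by auto
    qed
    define G where "G = (\<lambda>t. SOME g. g \<in> T \<and> (\<exists>g1 g2. g = {g1,g2} \<and> pt p y0 t \<in> open_segment g1 g2))"
    have G: "\<And>t. t \<in> X \<Longrightarrow> G t \<in> T \<and> (\<exists>g1 g2. G t = {g1,g2} \<and> pt p y0 t \<in> open_segment g1 g2)"
    proof -
      fix t assume "t \<in> X"
      then have "\<exists>g. g \<in> T \<and> (\<exists>g1 g2. g = {g1,g2} \<and> pt p y0 t \<in> open_segment g1 g2)" using X_def by auto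
      then show "G t \<in> T \<and> (\<exists>g1 g2. G t = {g1,g2} \<and> pt p y0 t \<in> open_segment g1 g2)"
        unfolding G_def by (rule someI_ex)
    qed
    have injG: "inj_on G X"
    proof (rule inj_onI)
      fix t1 t2 assume t1: "t1 \<in> X" and t2: "t2 \<in> X" and eq: "G t1 = G t2"
      obtain g1 g2 where g: "G t1 = {g1,g2}" "pt p y0 t1 \<in> open_segment g1 g2" using G[OF t1] by blast
      obtain h1 h2 where h: "G t2 = {h1,h2}" "pt p y0 t2 \<in> open_segment h1 h2" using G[OF t2] by blast
      have gT: "{g1,g2} \<in> T" using G[OF t1] g by simp
      have hg: "open_segment h1 h2 = open_segment g1 g2" using g h eq
        by (metis doubleton_eq_iff open_segment_commute)
      have ne: "{p,y0} \<noteq> {g1,g2}" using False gT by auto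
      show "t1 = t2"
        using cross_param_unique[OF edge0 tri_sub[OF tri gT] ne _ _ g(2) _ _ ] t1 t2 h(2) hg X_def by auto
    qed
    have Xfin: "finite X"
      using inj_on_finite[OF injG _ tri_finite[OF fin tri]] G by blast
    define ts where "ts = Min X"
    have tsX: "ts \<in> X" unfolding ts_def using Min_in[OF Xfin Xne] .
    have tsmin: "\<And>t. t \<in> X \<Longrightarrow> ts \<le> t" unfolding ts_def using Xfin by simp
    have ts: "0 < ts" "ts < 1" using tsX X_def by auto
    define x1 where "x1 = pt p y0 ts"
    obtain e1 e2 where eT: "{e1,e2} \<in> T" and x1e: "x1 \<in> open_segment e1 e2"
      using tsX unfolding X_def x1_def by blast
    have x1py: "x1 \<in> open_segment p y0" using ts py0 x1_def by (auto simp: open_seg_pt)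
    have x1S: "x1 \<notin> S" using free x1py by blast
    have eedge: "{e1,e2} \<in> edges_of S" using tri_sub[OF tri eT] .
    have eS: "e1 \<in> S" "e2 \<in> S" "e1 \<noteq> e2" using eedge by (simp_all add: edge_iff)
    have ne0: "{p,y0} \<noteq> {e1,e2}" using False eT by auto
    have tr: "ori p y0 e1 * ori p y0 e2 < 0" using transversal[OF edge0 eedge ne0 x1py x1e] .
    have ox1: "ori p q x1 = ts * ori p q y0" unfolding x1_def by (rule pt_scale_ori)
    obtain e e' where ee: "{e,e'} = {e1,e2}" and es: "sside p q s e"
    proof -
      obtain r where r: "0 < r" "r < 1" "x1 = pt e1 e2 r" using x1e by (auto simp: open_seg_pt)
      have "ori p q x1 = (1 - r) * ori p q e1 + r * ori p q e2" using r(3) by (simp add: pt_ori)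
      moreover have "ori p q x1 * ori p q s > 0" using ox1 y0s ts unfolding sside_def
        by (metis mult.assoc mult.commute mult_pos_pos)
      ultimately have "((1 - r) * ori p q e1 + r * ori p q e2) * ori p q s > 0" by simp
      then have "(1 - r) * (ori p q s * ori p q e1) + r * (ori p q s * ori p q e2) > 0"
        by (simp add: algebra_simps)
      then have "ori p q s * ori p q e1 > 0 \<or> ori p q s * ori p q e2 > 0" using r
        by (smt (verit, best) mult_nonneg_nonpos)
      then show ?thesis using that[of e1 e2] that[of e2 e1] unfolding sside_def by (auto simp: insert_commute)
    qed
    have eeT: "{e,e'} \<in> T" using eT ee by simp
    have eeS: "e \<in> S" "e' \<in> S" using ee eS by auto
    have x1ee: "x1 \<in> open_segment e e'" using x1e ee by (metis doubleton_eq_iff open_segment_commute)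
    have oe: "ori p q e \<noteq> 0" using es unfolding sside_def by auto
    have ep: "e \<noteq> p" using oe by auto
    have ex1: "e \<noteq> x1" using x1S eeS by auto
    have nd: "ori p x1 e \<noteq> 0"
    proof -
      have "ori p x1 e = ori e p x1" by (metis ori_rot)
      also have "\<dots> = ts * ori e p y0" unfolding x1_def by (simp add: pt_ori)
      also have "ori e p y0 = ori p y0 e" by (metis ori_rot)
      finally have h: "ori p x1 e = ts * ori p y0 e" .
      have "ori p y0 e \<noteq> 0" using tr ee by (metis doubleton_eq_iff mult_zero_left mult_zero_right less_irrefl)
      then show ?thesis using h ts by simp
    qed
    have open_px1: "open_segment p x1 \<subseteq> open_segment p y0"
      using open_sub_right[OF x1py] by (simp add: open_segment_commute)
    have s1: "open_segment p x1 \<inter> S = {}" using open_px1 free by blast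
    have s1T: "\<And>g1 g2. {g1,g2} \<in> T \<Longrightarrow> open_segment g1 g2 \<inter> open_segment p x1 \<noteq> {} \<Longrightarrow> ori p x1 g1 = 0 \<and> ori p x1 g2 = 0"
    proof -
      fix g1 g2 assume gT: "{g1,g2} \<in> T" and m: "open_segment g1 g2 \<inter> open_segment p x1 \<noteq> {}"
      then obtain w where w: "w \<in> open_segment g1 g2" "w \<in> open_segment p x1" by blast
      obtain l where l: "0 < l" "l < 1" "w = pt p x1 l" using w(2) by (auto simp: open_seg_pt)
      have "w = pt p y0 ((1 - l) * 0 + l * ts)" using l(3) x1_def pt_comb[of l p y0 0 ts] by (simp add: pt_def)
      then have wpt: "pt p y0 (l * ts) \<in> open_segment g1 g2" using w(1) by simp
      moreover have "0 < l * ts" using l ts by simp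
      moreover have "l * ts < 1" using l ts by (smt (verit) mult_le_cancel_right1)
      ultimately have "l * ts \<in> X" unfolding X_def using wpt gT by blast
      then have "ts \<le> l * ts" by (rule tsmin)
      moreover have "l * ts < ts" using l ts by simp
      ultimately show "ori p x1 g1 = 0 \<and> ori p x1 g2 = 0" by simp
    qed
    have open_x1e: "open_segment x1 e \<subseteq> open_segment e e'" using open_sub_right[OF x1ee] .
    have s2: "open_segment x1 e \<inter> S = {}" using open_x1e edge_open_free[OF tri_sub[OF tri eeT]] by blast
    have coll: "ori x1 e e = 0" "ori x1 e e' = 0" using seg_coll[OF x1ee] by simp_all
    have s2T: "\<And>g1 g2. {g1,g2} \<in> T \<Longrightarrow> open_segment g1 g2 \<inter> open_segment x1 e \<noteq> {} \<Longrightarrow> ori x1 e g1 = 0 \<and> ori x1 e g2 = 0"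
    proof -
      fix g1 g2 assume gT: "{g1,g2} \<in> T" and m: "open_segment g1 g2 \<inter> open_segment x1 e \<noteq> {}"
      then have "open_segment g1 g2 \<inter> open_segment e e' \<noteq> {}" using open_x1e by blast
      then have "{g1,g2} = {e,e'}" using tri_disj[OF tri gT eeT] by blast
      then show "ori x1 e g1 = 0 \<and> ori x1 e g2 = 0" using coll by (metis doubleton_eq_iff)
    qed
    have uT: "\<And>g1 g2. x1 \<notin> S \<Longrightarrow> {g1,g2} \<in> T \<Longrightarrow> x1 \<in> open_segment g1 g2 \<Longrightarrow> ori x1 e g1 = 0 \<and> ori x1 e g2 = 0"
    proof -
      fix g1 g2 assume gT: "{g1,g2} \<in> T" and m: "x1 \<in> open_segment g1 g2"
      then have "open_segment g1 g2 \<inter> open_segment e e' \<noteq> {}" using x1ee by blast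
      then have "{g1,g2} = {e,e'}" using tri_disj[OF tri gT eeT] by blast
      then show "ori x1 e g1 = 0 \<and> ori x1 e g2 = 0" using coll by (metis doubleton_eq_iff)
    qed
    define K where "K = {y\<in>S. y \<in> convex hull {p,x1,e} \<and> y \<noteq> p \<and> y \<noteq> x1}"
    have Kside: "\<And>y. y \<in> K \<Longrightarrow> bar e p x1 y > 0"
    proof -
      fix y assume yK: "y \<in> K"
      have yh: "y \<in> convex hull {p,x1,e}" using yK K_def by simp
      have "bar e p x1 y \<ge> 0" using yh hull3_iff[OF nd] by simp
      moreover have "bar e p x1 y \<noteq> 0"
      proof
        assume "bar e p x1 y = 0"
        then have "y \<in> closed_segment p x1" using bar_zero_seg[OF nd yh] by simp
        then have "y \<in> open_segment p x1" using yK K_def by (auto simp: open_segment_def)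
        then show False using s1 yK K_def by blast
      qed
      ultimately show "bar e p x1 y > 0" by simp
    qed
    have Kss: "\<And>y. y \<in> K \<Longrightarrow> sside p x1 e y"
    proof -
      fix y assume "y \<in> K"
      then have "bar e p x1 y > 0" by (rule Kside)
      then show "sside p x1 e y" unfolding bar_def sside_def
        by (simp add: zero_less_divide_iff zero_less_mult_iff ori_rot[of e p x1] ori_rot[of e p y]) (metis ori_rot)
    qed
    have Kfin: "finite K" using fin K_def by simp
    have eK: "e \<in> K" using eeS ep ex1 K_def by (simp add: hull_inc)
    have px1: "p \<noteq> x1" using x1S pqE by auto
    obtain z where zK: "z \<in> K" and zmin0: "\<forall>y\<in>K. \<not> sside p z x1 y" and znear0: "\<forall>y\<in>K. y \<notin> open_segment p z"
      using ex_first[OF Kfin _ px1 Kss] eK by blast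
    have zS: "z \<in> S" and zh: "z \<in> convex hull {p,x1,e}" and zp: "z \<noteq> p" and zx1: "z \<noteq> x1"
      using zK K_def by auto
    have "{p,z} \<in> T \<or> (x1 \<in> S \<and> (\<exists>c. {x1,c} \<in> T \<and> open_segment x1 c \<inter> open_segment p z \<noteq> {}))"
    proof (rule fan[OF tri pqE(2) nd eeS(1) s1 s1T s2 s2T uT zS zh zp zx1])
      fix y assume "y \<in> S" "y \<in> convex hull {p,x1,e}" "y \<noteq> p" "y \<noteq> x1"
      then have "y \<in> K" unfolding K_def by blast
      then show "\<not> sside p z x1 y" using zmin0 by blast
    next
      fix y assume y: "y \<in> S" "y \<in> convex hull {p,x1,e}"
      show "y \<notin> open_segment p z"
      proof (cases "y = p")
        case True then show ?thesis by (simp add: open_segment_def)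
      next
        case False
        have "y \<noteq> x1" using y x1S by auto
        then have "y \<in> K" unfolding K_def using y False by blast
        then show ?thesis using znear0 by blast
      qed
    qed
    then have pz: "{p,z} \<in> T" using x1S by blast
    have "sside p q s z"
    proof -
      have ob: "ori p q z = bar p x1 e z * ori p q p + bar x1 e p z * ori p q x1 + bar e p x1 z * ori p q e"
        by (rule ori_bary[OF nd])
      have b1: "bar x1 e p z \<ge> 0" using zh hull3_iff[OF nd] by simp
      have b2: "bar e p x1 z > 0" using Kside[OF zK] .
      have sx: "ori p q x1 * ori p q s > 0" using ox1 y0s ts unfolding sside_def
        by (metis mult.assoc mult.commute mult_pos_pos)
      have se: "ori p q e * ori p q s > 0" using es unfolding sside_def by (simp add: mult.commute)
      have "ori p q z * ori p q s = bar x1 e p z * (ori p q x1 * ori p q s) + bar e p x1 z * (ori p q e * ori p q s)"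
        using ob by (simp add: algebra_simps)
      moreover have "bar x1 e p z * (ori p q x1 * ori p q s) \<ge> 0" using b1 sx by simp
      moreover have "bar e p x1 z * (ori p q e * ori p q s) > 0" using b2 se by simp
      ultimately have "ori p q z * ori p q s > 0" by linarith
      then show ?thesis unfolding sside_def by (simp add: mult.commute)
    qed
    then show ?thesis using zS pz by blast
  qed
qed


lemma sside_swap: "sside b a v y = sside a b v y"
  unfolding sside_def by (simp add: ori_swap[of b a])

lemma sside_sym: "sside a b x y = sside a b y x"
  unfolding sside_def by (simp add: mult.commute)

lemma bar_z_eq_a:
  assumes nd: "ori a b r \<noteq> 0" and "bar b r a z = 0" "bar r a b z = 0"
  shows "z = a"
proof -
  have "bar a b r z = 1" using bar_sum[OF nd, of z] assms by simp
  then show ?thesis using bar_cramer[OF nd, of z] assms by simp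
qed

lemma esc:
  assumes nd: "ori a b r \<noteq> 0" and zh: "z \<in> convex hull {a,b,r}" and zb: "bar r a b z > 0"
    and y1: "y \<in> open_segment b c" and y2: "y \<in> open_segment a z"
  shows "sside b r a c \<and> sside a b r c"
proof -
  obtain t where t: "0 < t" "t < 1" "y = pt a z t" using y2 by (auto simp: open_seg_pt)
  obtain t' where t': "0 < t'" "t' < 1" "y = pt b c t'" using y1 by (auto simp: open_seg_pt)
  have hb: "bar a b r z \<ge> 0" "bar b r a z \<ge> 0" using zh hull3_iff[OF nd] by auto
  have oz1: "ori a b z = bar r a b z * ori a b r"
    using ori_bary[OF nd, of a b z] by simp
  have oz2: "ori b r z = bar a b r z * ori b r a"
    using ori_bary[OF nd, of b r z] by simp
  have e1: "t' * ori a b c = t * (bar r a b z * ori a b r)"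
  proof -
    have "ori a b y = t * ori a b z" using t(3) by (simp add: pt_ori)
    moreover have "ori a b y = t' * ori a b c" using t'(3) by (simp add: pt_ori)
    ultimately show ?thesis using oz1 by simp
  qed
  have e2: "t' * ori b r c = ((1 - t) + t * bar a b r z) * ori b r a"
  proof -
    have "ori b r y = (1 - t) * ori b r a + t * ori b r z" using t(3) by (simp add: pt_ori)
    moreover have "ori b r y = t' * ori b r c" using t'(3) by (simp add: pt_ori)
    ultimately show ?thesis using oz2 by (simp add: algebra_simps)
  qed
  have k1: "t * bar r a b z > 0" using t zb by simp
  have k2: "(1 - t) + t * bar a b r z > 0" using t hb by (simp add: add_pos_nonneg)
  have nd2: "ori b r a \<noteq> 0" using nd by (metis ori_rot)
  have sq1: "ori a b r * ori a b r > 0" using nd by (simp add: zero_less_mult_iff) (metis linorder_neqE_linordered_idom)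
  have sq2: "ori b r a * ori b r a > 0" using nd2 by (simp add: zero_less_mult_iff) (metis linorder_neqE_linordered_idom)
  have q1: "t' * (ori a b r * ori a b c) = (t * bar r a b z) * (ori a b r * ori a b r)"
  proof -
    have "t' * (ori a b r * ori a b c) = ori a b r * (t' * ori a b c)" by (simp add: algebra_simps)
    also have "\<dots> = ori a b r * (t * (bar r a b z * ori a b r))" unfolding e1 ..
    also have "\<dots> = (t * bar r a b z) * (ori a b r * ori a b r)" by (simp add: algebra_simps)
    finally show ?thesis .
  qed
  have "t' * (ori a b r * ori a b c) > 0" unfolding q1 using k1 sq1 by (rule mult_pos_pos)
  then have s2: "sside a b r c" unfolding sside_def using t' by (simp add: zero_less_mult_iff)
  have q2: "t' * (ori b r a * ori b r c) = ((1 - t) + t * bar a b r z) * (ori b r a * ori b r a)"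
  proof -
    have "t' * (ori b r a * ori b r c) = ori b r a * (t' * ori b r c)" by (simp add: algebra_simps)
    also have "\<dots> = ori b r a * (((1 - t) + t * bar a b r z) * ori b r a)" unfolding e2 ..
    also have "\<dots> = ((1 - t) + t * bar a b r z) * (ori b r a * ori b r a)" by (simp add: algebra_simps)
    finally show ?thesis .
  qed
  have "t' * (ori b r a * ori b r c) > 0" unfolding q2 using k2 sq2 by (rule mult_pos_pos)
  then have s1: "sside b r a c" unfolding sside_def using t' by (simp add: zero_less_mult_iff)
  show ?thesis using s1 s2 by simp
qed

lemma alpha:
  assumes nd: "ori a b r \<noteq> 0" and sx: "sside a x b r" and nb: "ori a x b \<noteq> 0"
    and zh: "z \<in> convex hull {a,b,r}" and za: "z \<noteq> a"
  shows "sside a x b z"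
proof -
  have hb: "bar b r a z \<ge> 0" "bar r a b z \<ge> 0" using zh hull3_iff[OF nd] by auto
  have oz: "ori a x z = bar b r a z * ori a x b + bar r a b z * ori a x r"
    using ori_bary[OF nd, of a x z] by simp
  have pr: "ori a x b * ori a x r > 0" using sx unfolding sside_def .
  have sq: "ori a x b * ori a x b > 0" using nb by (simp add: zero_less_mult_iff)
       (metis linorder_neqE_linordered_idom)
  have eq: "ori a x b * ori a x z = bar b r a z * (ori a x b * ori a x b) + bar r a b z * (ori a x b * ori a x r)"
    using oz by (simp add: algebra_simps)
  have "bar b r a z > 0 \<or> bar r a b z > 0"
  proof (rule ccontr)
    assume "\<not> (bar b r a z > 0 \<or> bar r a b z > 0)"
    then have "bar b r a z = 0" "bar r a b z = 0" using hb by auto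
    then show False using bar_z_eq_a[OF nd] za by blast
  qed
  then have "ori a x b * ori a x z > 0"
  proof
    assume h: "bar b r a z > 0"
    have "bar b r a z * (ori a x b * ori a x b) > 0" using h sq by simp
    moreover have "bar r a b z * (ori a x b * ori a x r) \<ge> 0" using hb pr by simp
    ultimately show ?thesis using eq by linarith
  next
    assume h: "bar r a b z > 0"
    have "bar b r a z * (ori a x b * ori a x b) \<ge> 0" using hb sq by simp
    moreover have "bar r a b z * (ori a x b * ori a x r) > 0" using h pr by simp
    ultimately show ?thesis using eq by linarith
  qed
  then show ?thesis unfolding sside_def .
qed

lemma meet:
  fixes p rp q rq :: point
  assumes f: "ori p rp q \<noteq> 0" and fs: "\<not> sside p rp q rq"
    and g: "ori q rq p \<noteq> 0" and gs: "\<not> sside q rq p rp"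
    and prp: "p \<noteq> rp" and qrq: "q \<noteq> rq"
  shows "\<exists>o1. o1 \<in> closed_segment p rp \<and> o1 \<in> closed_segment q rq"
proof -
  have half: "\<And>a b c d. ori a b c \<noteq> 0 \<Longrightarrow> \<not> sside a b c d \<Longrightarrow> \<exists>l. 0 \<le> l \<and> l \<le> 1 \<and> ori a b (pt c d l) = 0"
  proof -
    fix a b c d :: point
    assume n: "ori a b c \<noteq> 0" and s: "\<not> sside a b c d"
    have le: "ori a b c * ori a b d \<le> 0" using s unfolding sside_def by simp
    define F where "F = ori a b c"
    define G where "G = ori a b d"
    have le': "F * G \<le> 0" using le by (simp add: F_def G_def)
    have FF: "F * F > 0" using n F_def by (simp add: zero_less_mult_iff) (metis linorder_neqE_linordered_idom)
    have FG: "F - G \<noteq> 0"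
    proof
      assume "F - G = 0"
      then have "G = F" by simp
      then have "F * G > 0" using FF by simp
      then show False using le' by simp
    qed
    define l where "l = F / (F - G)"
    have ll: "l * (F - G) = F" using FG l_def by simp
    have "ori a b (pt c d l) = (1 - l) * F + l * G" unfolding F_def G_def by (simp add: pt_ori)
    also have "\<dots> = F - l * (F - G)" by (simp add: algebra_simps)
    also have "\<dots> = 0" using ll by simp
    finally have z: "ori a b (pt c d l) = 0" .
    have "0 \<le> l \<and> l \<le> 1"
    proof (cases "F > 0")
      case True
      then have "G \<le> 0" using le' by (simp add: mult_le_0_iff)
      then have "F - G \<ge> F" by simp
      then show ?thesis using True unfolding l_def by (simp add: divide_le_eq_1)
    next
      case False
      then have Fn: "F < 0" using n F_def by simp
      then have "G \<ge> 0" using le' by (simp add: mult_le_0_iff)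
      then have "F - G \<le> F" by simp
      then show ?thesis using Fn unfolding l_def by (simp add: divide_le_eq_1 divide_nonneg_neg zero_le_divide_iff)
    qed
    then show "\<exists>l. 0 \<le> l \<and> l \<le> 1 \<and> ori a b (pt c d l) = 0" using z by blast
  qed
  obtain l1 where l1: "0 \<le> l1" "l1 \<le> 1" "ori p rp (pt q rq l1) = 0" using half[OF f fs] by blast
  obtain l2 where l2: "0 \<le> l2" "l2 \<le> 1" "ori q rq (pt p rp l2) = 0" using half[OF g gs] by blast
  define o1 where "o1 = pt q rq l1"
  define o2 where "o2 = pt p rp l2"
  have o1c: "o1 \<in> closed_segment q rq" using pt_closed l1 o1_def by simp
  have o2c: "o2 \<in> closed_segment p rp" using pt_closed l2 o2_def by simp
  have "o1 = o2"
  proof (rule ccontr)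
    assume ne: "o1 \<noteq> o2"
    have "ori p rp o1 = 0" using l1 o1_def by simp
    moreover have "ori p rp o2 = 0" using seg_ori[OF o2c] .
    moreover have "ori q rq o1 = 0" using seg_ori[OF o1c] .
    moreover have "ori q rq o2 = 0" using l2 o2_def by simp
    ultimately have "ori q rq p = 0" using two_lines[OF prp _ _ _ _ ne] by blast
    then show False using g by simp
  qed
  then show ?thesis using o1c o2c by blast
qed


lemma Kside_lemma:
  assumes nd: "ori a b r \<noteq> 0" and free: "open_segment a b \<inter> S = {}"
    and y: "y \<in> S" "y \<in> convex hull {a,b,r}" "y \<noteq> a" "y \<noteq> b"
  shows "bar r a b y > 0"
proof -
  have "bar r a b y \<ge> 0" using y(2) hull3_iff[OF nd] by simp
  moreover have "bar r a b y \<noteq> 0"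
  proof
    assume "bar r a b y = 0"
    then have "y \<in> closed_segment a b" using bar_zero_seg[OF nd y(2)] by simp
    then have "y \<in> open_segment a b" using y by (auto simp: open_segment_def)
    then show False using free y by blast
  qed
  ultimately show ?thesis by simp
qed

lemma bar_sside: "bar r a b y > 0 \<Longrightarrow> sside a b r y"
  unfolding bar_def sside_def
  by (auto simp: zero_less_divide_iff zero_less_mult_iff)

lemma edge_pair_ori:
  assumes tri: "is_triangulation S T" and gT: "{g1,g2} \<in> T" and eT: "{a,b} \<in> T"
    and m: "open_segment g1 g2 \<inter> open_segment a b \<noteq> {}"
  shows "ori a b g1 = 0 \<and> ori a b g2 = 0"
proof -
  have "{g1,g2} = {a,b}" using tri_disj[OF tri gT eT] m by blast
  then show ?thesis by (metis doubleton_eq_iff ori_triv(2) ori_triv(3))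
qed

lemma fan_edge:
  assumes fin: "finite S" and tri: "is_triangulation S T" and ab: "{a,b} \<in> T" and br: "{b,r} \<in> T"
    and nd: "ori a b r \<noteq> 0"
  shows "\<exists>z\<in>S. z \<in> convex hull {a,b,r} \<and> z \<noteq> a \<and> z \<noteq> b \<and> bar r a b z > 0 \<and>
     (\<forall>y\<in>S. y \<in> convex hull {a,b,r} \<longrightarrow> y \<noteq> a \<longrightarrow> y \<noteq> b \<longrightarrow> \<not> sside a z b y) \<and>
     ({a,z} \<in> T \<or> (\<exists>c. {b,c} \<in> T \<and> open_segment b c \<inter> open_segment a z \<noteq> {}))"
proof -
  have abE: "a \<noteq> b" "a \<in> S" "b \<in> S" using tri_sub[OF tri ab] by (simp_all add: edge_iff)
  have brE: "b \<noteq> r" "r \<in> S" using tri_sub[OF tri br] by (simp_all add: edge_iff)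
  have free1: "open_segment a b \<inter> S = {}" using edge_open_free[OF tri_sub[OF tri ab]] .
  have free2: "open_segment b r \<inter> S = {}" using edge_open_free[OF tri_sub[OF tri br]] .
  define K where "K = {y\<in>S. y \<in> convex hull {a,b,r} \<and> y \<noteq> a \<and> y \<noteq> b}"
  have Kside: "\<And>y. y \<in> K \<Longrightarrow> bar r a b y > 0"
    using Kside_lemma[OF nd free1] unfolding K_def by blast
  have Kss: "\<And>y. y \<in> K \<Longrightarrow> sside a b r y" using Kside bar_sside by blast
  have ra: "r \<noteq> a" "r \<noteq> b" using nd by auto
  have rK: "r \<in> K" unfolding K_def using brE ra by (simp add: hull_inc)
  have Kfin: "finite K" using fin K_def by simp
  obtain z where zK: "z \<in> K" and zmin0: "\<forall>y\<in>K. \<not> sside a z b y" and znear0: "\<forall>y\<in>K. y \<notin> open_segment a z"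
    using ex_first[OF Kfin _ abE(1) Kss] rK by blast
  have zS: "z \<in> S" and zh: "z \<in> convex hull {a,b,r}" and za: "z \<noteq> a" and zb: "z \<noteq> b"
    using zK K_def by auto
  have s1T: "\<And>g1 g2. {g1,g2} \<in> T \<Longrightarrow> open_segment g1 g2 \<inter> open_segment a b \<noteq> {} \<Longrightarrow> ori a b g1 = 0 \<and> ori a b g2 = 0"
    by (rule edge_pair_ori[OF tri _ ab])
  have s2T: "\<And>g1 g2. {g1,g2} \<in> T \<Longrightarrow> open_segment g1 g2 \<inter> open_segment b r \<noteq> {} \<Longrightarrow> ori b r g1 = 0 \<and> ori b r g2 = 0"
    by (rule edge_pair_ori[OF tri _ br])
  have uT: "\<And>g1 g2. b \<notin> S \<Longrightarrow> {g1,g2} \<in> T \<Longrightarrow> b \<in> open_segment g1 g2 \<Longrightarrow> ori b r g1 = 0 \<and> ori b r g2 = 0"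
    using abE(3) by simp
  have zmin: "\<And>y. y \<in> S \<Longrightarrow> y \<in> convex hull {a,b,r} \<Longrightarrow> y \<noteq> a \<Longrightarrow> y \<noteq> b \<Longrightarrow> \<not> sside a z b y"
  proof -
    fix y assume "y \<in> S" "y \<in> convex hull {a,b,r}" "y \<noteq> a" "y \<noteq> b"
    then have "y \<in> K" unfolding K_def by blast
    then show "\<not> sside a z b y" using zmin0 by blast
  qed
  have znear: "\<And>y. y \<in> S \<Longrightarrow> y \<in> convex hull {a,b,r} \<Longrightarrow> y \<notin> open_segment a z"
  proof -
    fix y assume y: "y \<in> S" "y \<in> convex hull {a,b,r}"
    show "y \<notin> open_segment a z"
    proof (cases "y = a \<or> y = b")
      case True
      show ?thesis
      proof
        assume yo: "y \<in> open_segment a z"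
        then have "y \<noteq> a" by (simp add: open_segment_def)
        then have yb: "y = b" using True by simp
        have h1: "ori a z y = 0" using seg_coll[OF yo] by blast
        have h2: "ori a b z = bar r a b z * ori a b r" using ori_bary[OF nd, of a b z] by simp
        have h3: "bar r a b z > 0" using Kside[OF zK] .
        have h4: "ori a z b = - ori a b z" by (rule ori_swap2)
        have "ori a b z = 0" using h1 h4 yb by simp
        then have "bar r a b z * ori a b r = 0" using h2 by simp
        then show False using h3 nd by simp
      qed
    next
      case False
      then have "y \<in> K" unfolding K_def using y by blast
      then show ?thesis using znear0 by blast
    qed
  qed
  have F: "{a,z} \<in> T \<or> (b \<in> S \<and> (\<exists>c. {b,c} \<in> T \<and> open_segment b c \<inter> open_segment a z \<noteq> {}))"
    by (rule fan[OF tri abE(2) nd brE(2) free1 s1T free2 s2T uT zS zh za zb zmin znear])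
  have F': "{a,z} \<in> T \<or> (\<exists>c. {b,c} \<in> T \<and> open_segment b c \<inter> open_segment a z \<noteq> {})"
    using F by blast
  have B: "\<forall>y\<in>S. y \<in> convex hull {a,b,r} \<longrightarrow> y \<noteq> a \<longrightarrow> y \<noteq> b \<longrightarrow> \<not> sside a z b y"
    using zmin by blast
  have conj: "z \<in> convex hull {a,b,r} \<and> z \<noteq> a \<and> z \<noteq> b \<and> bar r a b z > 0 \<and>
     (\<forall>y\<in>S. y \<in> convex hull {a,b,r} \<longrightarrow> y \<noteq> a \<longrightarrow> y \<noteq> b \<longrightarrow> \<not> sside a z b y) \<and>
     ({a,z} \<in> T \<or> (\<exists>c. {b,c} \<in> T \<and> open_segment b c \<inter> open_segment a z \<noteq> {}))"
    using zh za zb Kside[OF zK] B F' by (intro conjI)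
  show ?thesis
  proof (rule bexI[of _ z])
    show "z \<in> S" by (rule zS)
  qed (rule conj)
qed


lemma sside_trans: "sside a b x y \<Longrightarrow> sside a b y z \<Longrightarrow> sside a b x z"
  unfolding sside_def by (auto simp: zero_less_mult_iff)

lemma side_from_bar:
  assumes nd: "ori a b r \<noteq> 0" and pos: "bar b r a z > 0"
  shows "sside a r b z"
proof -
  have oz: "ori a r z = bar b r a z * ori a r b" using ori_bary[OF nd, of a r z] by simp
  have n: "ori a r b \<noteq> 0" using nd by (simp add: ori_swap2[of a r b])
  have "ori a r b * ori a r b > 0" using n by (simp add: zero_less_mult_iff) (metis linorder_neqE_linordered_idom)
  then have pp: "bar b r a z * (ori a r b * ori a r b) > 0" using pos by simp
  have eq: "ori a r b * ori a r z = bar b r a z * (ori a r b * ori a r b)" unfolding oz by (simp add: algebra_simps)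
  have "ori a r b * ori a r z > 0" by (subst eq) (rule pp)
  then show ?thesis unfolding sside_def .
qed

lemma sside_nz: "sside a b x y \<Longrightarrow> ori a b y \<noteq> 0 \<and> ori a b x \<noteq> 0"
  unfolding sside_def by auto

lemma adj_tri:
  assumes fin: "finite S" and tri: "is_triangulation S T" and pq: "{p,q} \<in> T"
    and sS: "s \<in> S" and nz: "ori p q s \<noteq> 0"
  shows "\<exists>w\<in>S. sside p q s w \<and> {p,w} \<in> T \<and> {q,w} \<in> T \<and> convex hull {p,q,w} \<inter> S = {p,q,w}"
proof -
  have pqE: "p \<noteq> q" "p \<in> S" "q \<in> S" using tri_sub[OF tri pq] by (simp_all add: edge_iff)
  have qp: "{q,p} \<in> T" using pq by (simp add: insert_commute)
  have nzq: "ori q p s \<noteq> 0" using nz by (simp add: ori_swap[of q p])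
  define Np where "Np = {c\<in>S. sside p q s c \<and> {p,c} \<in> T}"
  define Nq where "Nq = {c\<in>S. sside p q s c \<and> {q,c} \<in> T}"
  have Npne: "Np \<noteq> {}" using nbr_exists[OF fin tri pq sS nz] Np_def by blast
  have Nqne: "Nq \<noteq> {}" using nbr_exists[OF fin tri qp sS nzq] Nq_def sside_swap by blast
  have Npfin: "finite Np" "finite Nq" using fin Np_def Nq_def by simp_all
  obtain rp where rpN: "rp \<in> Np" and rpmin: "\<forall>c\<in>Np. \<not> sside p rp q c"
    using ex_first[OF Npfin(1) Npne pqE(1), of s] Np_def by blast
  obtain rq where rqN: "rq \<in> Nq" and rqmin: "\<forall>c\<in>Nq. \<not> sside q rq p c"
    using ex_first[OF Npfin(2) Nqne pqE(1)[symmetric], of s] Nq_def sside_swap by blast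
  have rp: "rp \<in> S" "sside p q s rp" "{p,rp} \<in> T" using rpN Np_def by auto
  have rq: "rq \<in> S" "sside p q s rq" "{q,rq} \<in> T" using rqN Nq_def by auto
  have orp: "ori p q rp \<noteq> 0" and orq: "ori p q rq \<noteq> 0" using rp(2) rq(2) sside_nz by blast+
  have ndq: "ori q p rp \<noteq> 0" using orp by (simp add: ori_swap[of q p])
  obtain z1 where z1S: "z1 \<in> S" and z1h: "z1 \<in> convex hull {q,p,rp}" and z1q: "z1 \<noteq> q" and z1p: "z1 \<noteq> p"
      and z1b: "bar rp q p z1 > 0"
      and z1min: "\<forall>y\<in>S. y \<in> convex hull {q,p,rp} \<longrightarrow> y \<noteq> q \<longrightarrow> y \<noteq> p \<longrightarrow> \<not> sside q z1 p y"
      and z1d: "{q,z1} \<in> T \<or> (\<exists>c. {p,c} \<in> T \<and> open_segment p c \<inter> open_segment q z1 \<noteq> {})"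
    using fan_edge[OF fin tri qp rp(3) ndq] by blast
  have z1T: "{q,z1} \<in> T"
  proof (rule ccontr)
    assume "{q,z1} \<notin> T"
    then obtain c y where cT: "{p,c} \<in> T" and y: "y \<in> open_segment p c" "y \<in> open_segment q z1"
      using z1d by blast
    have e: "sside p rp q c \<and> sside q p rp c" using esc[OF ndq z1h z1b y] .
    have cS: "c \<in> S" using tri_sub[OF tri cT] by (simp add: edge_iff)
    have "sside p q rp c" using e sside_swap by blast
    then have "sside p q s c" using rp(2) sside_trans by blast
    then have "c \<in> Np" using cS cT Np_def by simp
    then show False using rpmin e by blast
  qed
  have z1s: "sside p q s z1"
  proof -
    have "sside q p rp z1" using bar_sside[OF z1b] .
    then have "sside p q rp z1" using sside_swap by blast
    then show ?thesis using rp(2) sside_trans by blast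
  qed
  have z1N: "z1 \<in> Nq" using z1S z1T z1s Nq_def by simp
  have nz1: "\<not> sside q rq p z1" using rqmin z1N by blast
  obtain z2 where z2S: "z2 \<in> S" and z2h: "z2 \<in> convex hull {p,q,rq}" and z2p: "z2 \<noteq> p" and z2q: "z2 \<noteq> q"
      and z2b: "bar rq p q z2 > 0"
      and z2d: "{p,z2} \<in> T \<or> (\<exists>c. {q,c} \<in> T \<and> open_segment q c \<inter> open_segment p z2 \<noteq> {})"
    using fan_edge[OF fin tri pq rq(3) orq] by blast
  have z2T: "{p,z2} \<in> T"
  proof (rule ccontr)
    assume "{p,z2} \<notin> T"
    then obtain c y where cT: "{q,c} \<in> T" and y: "y \<in> open_segment q c" "y \<in> open_segment p z2"
      using z2d by blast
    have e: "sside q rq p c \<and> sside p q rq c" using esc[OF orq z2h z2b y] .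
    have cS: "c \<in> S" using tri_sub[OF tri cT] by (simp add: edge_iff)
    have "sside p q s c" using e rq(2) sside_trans by blast
    then have "c \<in> Nq" using cS cT Nq_def by simp
    then show False using rqmin e by blast
  qed
  have z2s: "sside p q s z2"
  proof -
    have "sside p q rq z2" using bar_sside[OF z2b] .
    then show ?thesis using rq(2) sside_trans by blast
  qed
  have z2N: "z2 \<in> Np" using z2S z2T z2s Np_def by simp
  have nz2: "\<not> sside p rp q z2" using rpmin z2N by blast
  \<comment> \<open>the two first neighbours coincide\<close>
  have f: "ori p rp q \<noteq> 0" using orp by (simp add: ori_swap2[of p rp q])
  have g: "ori q rq p \<noteq> 0" using orq by (simp add: ori_swap2[of q rq p] ori_swap[of q p])
  have fs: "\<not> sside p rp q rq"
  proof
    assume "sside p rp q rq"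
    then have "sside p rp q z2" using alpha[OF orq _ f z2h z2p] by blast
    then show False using nz2 by simp
  qed
  have gs: "\<not> sside q rq p rp"
  proof
    assume "sside q rq p rp"
    then have "sside q rq p z1" using alpha[OF ndq _ g z1h z1q] by blast
    then show False using nz1 by simp
  qed
  have prp: "p \<noteq> rp" using orp by auto
  have qrq: "q \<noteq> rq" using orq by auto
  obtain o1 where o1: "o1 \<in> closed_segment p rp" "o1 \<in> closed_segment q rq"
    using meet[OF f fs g gs prp qrq] by blast
  have eq: "rp = rq"
  proof (rule ccontr)
    assume ne: "rp \<noteq> rq"
    have "noncrossing {p,rp} {q,rq}" using tri_nc[OF tri rp(3) rq(3)] .
    then have "o1 \<in> convex hull ({p,rp} \<inter> {q,rq})"
      using o1 unfolding noncrossing_def by (auto simp: segment_convex_hull)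
    moreover have "{p,rp} \<inter> {q,rq} = {}" using ne pqE(1) orp orq by auto
    ultimately show False by simp
  qed
  define w where "w = rp"
  have wS: "w \<in> S" and ws: "sside p q s w" and pw: "{p,w} \<in> T" and qw: "{q,w} \<in> T"
    using rp rq eq w_def by auto
  have ndw: "ori q p w \<noteq> 0" using ndq w_def by simp
  have ndw2: "ori w q p \<noteq> 0" using ndw by (metis ori_rot)
  have qwedge: "closed_segment w q \<inter> S = {w,q}"
    using tri_sub[OF tri qw] by (simp add: edge_iff closed_segment_commute insert_commute)
  have nzw: "\<not> sside q w p z1" using nz1 eq w_def by simp
  have key: "\<And>y. y \<in> S \<Longrightarrow> y \<in> convex hull {q,p,w} \<Longrightarrow> \<not> sside q w p y \<Longrightarrow> y = w \<or> y = q"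
  proof -
    fix y assume yS: "y \<in> S" and yh: "y \<in> convex hull {q,p,w}" and ns: "\<not> sside q w p y"
    have "bar p w q y \<ge> 0" using yh hull3_iff[OF ndw] by simp
    moreover have "bar p w q y \<noteq> 0 \<Longrightarrow> sside q w p y"
      using side_from_bar[OF ndw] \<open>bar p w q y \<ge> 0\<close> by simp
    ultimately have "bar p w q y = 0" using ns by auto
    moreover have "y \<in> convex hull {w,q,p}" using yh by (simp add: insert_commute)
    ultimately have "y \<in> closed_segment w q" using bar_zero_seg[OF ndw2] by simp
    then show "y = w \<or> y = q" using qwedge yS by blast
  qed
  have z1w: "z1 = w" using key[OF z1S _ nzw] z1h z1q w_def by blast
  have empty: "convex hull {p,q,w} \<inter> S = {p,q,w}"
  proof
    show "{p,q,w} \<subseteq> convex hull {p,q,w} \<inter> S" using pqE wS by (auto intro: hull_inc)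
  next
    show "convex hull {p,q,w} \<inter> S \<subseteq> {p,q,w}"
    proof
      fix y assume y: "y \<in> convex hull {p,q,w} \<inter> S"
      show "y \<in> {p,q,w}"
      proof (rule ccontr)
        assume ny: "y \<notin> {p,q,w}"
        have yh: "y \<in> convex hull {q,p,w}" using y by (simp add: insert_commute)
        have "\<not> sside q z1 p y" using z1min y ny w_def yh by auto
        then have "\<not> sside q w p y" using z1w by simp
        then have "y = w \<or> y = q" using key y yh by blast
        then show False using ny by auto
      qed
    qed
  qed
  show ?thesis using wS ws pw qw empty by blast
qed


definition inT :: "point \<Rightarrow> point \<Rightarrow> point \<Rightarrow> point \<Rightarrow> bool" where
  "inT a b c y \<longleftrightarrow> bar a b c y > 0 \<and> bar b c a y > 0 \<and> bar c a b y > 0"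

lemma small1:
  fixes A B d :: real
  assumes A: "A > 0" and d: "0 \<le> d" "d \<le> A / (2 * (A + \<bar>B\<bar>))"
  shows "(1 - d) * A + d * B > 0"
proof -
  have P: "A + \<bar>B\<bar> > 0" using A by simp
  have "d * (2 * (A + \<bar>B\<bar>)) \<le> A" using d(2) P by (simp add: le_divide_eq)
  then have h: "d * A + d * \<bar>B\<bar> \<le> A / 2" by (simp add: algebra_simps)
  have "d * (- \<bar>B\<bar>) \<le> d * B" using mult_left_mono[OF _ d(1), of "- \<bar>B\<bar>" B] by simp
  then have "d * B \<ge> - (d * \<bar>B\<bar>)" by simp
  then show ?thesis using h A by (simp add: algebra_simps)
qed

lemma small3:
  fixes A1 A2 A3 B1 B2 B3 :: real
  assumes "A1 > 0" "A2 > 0" "A3 > 0"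
  shows "\<exists>d. 0 < d \<and> d < 1 \<and> (1-d) * A1 + d * B1 > 0 \<and> (1-d) * A2 + d * B2 > 0 \<and> (1-d) * A3 + d * B3 > 0"
proof -
  define d where "d = min (1/2) (min (A1 / (2 * (A1 + \<bar>B1\<bar>))) (min (A2 / (2 * (A2 + \<bar>B2\<bar>))) (A3 / (2 * (A3 + \<bar>B3\<bar>)))))"
  have p1: "A1 / (2 * (A1 + \<bar>B1\<bar>)) > 0" using assms by simp
  have p2: "A2 / (2 * (A2 + \<bar>B2\<bar>)) > 0" using assms by simp
  have p3: "A3 / (2 * (A3 + \<bar>B3\<bar>)) > 0" using assms by simp
  have d0: "0 < d" using p1 p2 p3 unfolding d_def by simp
  have d1: "d < 1" unfolding d_def by linarith
  have b1: "d \<le> A1 / (2 * (A1 + \<bar>B1\<bar>))" unfolding d_def by linarith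
  have b2: "d \<le> A2 / (2 * (A2 + \<bar>B2\<bar>))" unfolding d_def by linarith
  have b3: "d \<le> A3 / (2 * (A3 + \<bar>B3\<bar>))" unfolding d_def by linarith
  have "(1-d) * A1 + d * B1 > 0" using small1[OF assms(1) _ b1] d0 by simp
  moreover have "(1-d) * A2 + d * B2 > 0" using small1[OF assms(2) _ b2] d0 by simp
  moreover have "(1-d) * A3 + d * B3 > 0" using small1[OF assms(3) _ b3] d0 by simp
  ultimately show ?thesis using d0 d1 by blast
qed

lemma bar_vert_all:
  assumes nd: "ori a b c \<noteq> 0"
  shows "bar a b c a = 1" "bar b c a a = 0" "bar c a b a = 0"
    "bar a b c b = 0" "bar b c a b = 1" "bar c a b b = 0"
    "bar a b c c = 0" "bar b c a c = 0" "bar c a b c = 1"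
proof -
  have n2: "ori b c a \<noteq> 0" "ori c a b \<noteq> 0" using ori_nd_rot[OF nd] by auto
  show "bar a b c a = 1" using bar_vert[OF nd] .
  show "bar b c a b = 1" using bar_vert[OF n2(1)] .
  show "bar c a b c = 1" using bar_vert[OF n2(2)] .
qed (simp_all)

lemma inT_notS:
  assumes nd: "ori a b c \<noteq> 0" and tS: "convex hull {a,b,c} \<inter> S = {a,b,c}" and y: "inT a b c y"
  shows "y \<notin> S"
proof
  assume yS: "y \<in> S"
  have "y \<in> convex hull {a,b,c}" using y hull3_iff[OF nd] unfolding inT_def by simp
  then have "y \<in> {a,b,c}" using yS tS by blast
  then show False using y bar_vert_all[OF nd] unfolding inT_def by auto
qed

lemma inT_comb:
  assumes nd: "ori a b c \<noteq> 0" and y: "inT a b c y" and x: "x \<in> convex hull {a,b,c}" and l: "0 \<le> l" "l < 1"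
  shows "inT a b c ((1 - l) *\<^sub>R y + l *\<^sub>R x)"
proof -
  have xb: "bar a b c x \<ge> 0" "bar b c a x \<ge> 0" "bar c a b x \<ge> 0" using x hull3_iff[OF nd] by auto
  have yb: "bar a b c y > 0" "bar b c a y > 0" "bar c a b y > 0" using y unfolding inT_def by auto
  have k: "1 - l > 0" using l by simp
  show ?thesis unfolding inT_def bar_comb
    using yb xb k l by (simp add: add_pos_nonneg)
qed

lemma edge_enters:
  assumes nd: "ori a b c \<noteq> 0" and tS: "convex hull {a,b,c} \<inter> S = {a,b,c}"
    and e: "{m1,m2} \<in> edges_of S" and z: "zz \<in> closed_segment m1 m2" and zi: "inT a b c zz"
  shows "\<exists>s1 s2. {s1,s2} \<in> {{a,b},{b,c},{a,c}} \<and> {m1,m2} \<noteq> {s1,s2} \<and> open_segment m1 m2 \<inter> open_segment s1 s2 \<noteq> {}"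
proof -
  have E: "m1 \<noteq> m2" "m1 \<in> S" "m2 \<in> S" "closed_segment m1 m2 \<inter> S = {m1,m2}" using e by (simp_all add: edge_iff)
  have zS: "zz \<notin> S" using inT_notS[OF nd tS zi] .
  have zo: "zz \<in> open_segment m1 m2" using z zS E by (auto simp: open_segment_def)
  have hv: "\<And>m. m \<in> S \<Longrightarrow> m \<notin> {a,b,c} \<Longrightarrow> m \<notin> convex hull {a,b,c}" using tS by blast
  have nd2: "ori b c a \<noteq> 0" "ori c a b \<noteq> 0" using ori_nd_rot[OF nd] by auto
  have hullrot: "convex hull {b,c,a} = convex hull {a,b,c}" "convex hull {c,a,b} = convex hull {a,b,c}"
    by (simp_all add: insert_commute)
  have main: "\<And>m m'. {m,m'} = {m1,m2} \<Longrightarrow> m \<notin> {a,b,c} \<Longrightarrow> (\<exists>s1 s2. {s1,s2} \<in> {{a,b},{b,c},{a,c}} \<and> {m1,m2} \<noteq> {s1,s2} \<and> open_segment m1 m2 \<inter> open_segment s1 s2 \<noteq> {})"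
  proof -
    fix m m' assume mm: "{m,m'} = {m1,m2}" and mv: "m \<notin> {a,b,c}"
    have mS: "m \<in> S" using mm E by auto
    have mh: "m \<notin> convex hull {a,b,c}" using hv[OF mS mv] .
    have zo': "zz \<in> open_segment m m'" using zo mm by (metis doubleton_eq_iff open_segment_commute)
    have neg: "bar a b c m < 0 \<or> bar b c a m < 0 \<or> bar c a b m < 0" using mh hull3_iff[OF nd] by auto
    obtain l where l: "0 < l" "l < 1" "(1-l) * bar a b c zz + l * bar a b c m \<ge> 0"
        "(1-l) * bar b c a zz + l * bar b c a m \<ge> 0" "(1-l) * bar c a b zz + l * bar c a b m \<ge> 0"
        and l0: "(1-l) * bar a b c zz + l * bar a b c m = 0 \<or> (1-l) * bar b c a zz + l * bar b c a m = 0 \<or>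
                 (1-l) * bar c a b zz + l * bar c a b m = 0"
      using exit3[of "bar a b c zz" "bar b c a zz" "bar c a b zz" "bar a b c m" "bar b c a m" "bar c a b m"] zi neg
      unfolding inT_def by blast
    define q where "q = (1 - l) *\<^sub>R zz + l *\<^sub>R m"
    have qb: "bar a b c q \<ge> 0" "bar b c a q \<ge> 0" "bar c a b q \<ge> 0" using l unfolding q_def bar_comb by auto
    have qh: "q \<in> convex hull {a,b,c}" using qb hull3_iff[OF nd] by simp
    have qo: "q \<in> open_segment m m'" unfolding q_def by (rule open_seg_shrink[OF zo' l(1,2)])
    have qo': "q \<in> open_segment m1 m2" using qo mm by (metis doubleton_eq_iff open_segment_commute)
    have qS: "q \<notin> S" using edge_open_free[OF e] qo' by blast
    have qv: "q \<noteq> a" "q \<noteq> b" "q \<noteq> c" using qS tS by auto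
    have ne: "\<And>s1 s2. {s1,s2} \<in> {{a,b},{b,c},{a,c}} \<Longrightarrow> {m1,m2} \<noteq> {s1,s2}" using mm mv by auto
    from l0 show "(\<exists>s1 s2. {s1,s2} \<in> {{a,b},{b,c},{a,c}} \<and> {m1,m2} \<noteq> {s1,s2} \<and> open_segment m1 m2 \<inter> open_segment s1 s2 \<noteq> {})"
    proof (elim disjE)
      assume "(1-l) * bar a b c zz + l * bar a b c m = 0"
      then have "bar a b c q = 0" unfolding q_def bar_comb .
      then have "q \<in> closed_segment b c" using bar_zero_seg[OF nd2(1), of q] qh hullrot by simp
      then have "q \<in> open_segment b c" using qv by (simp add: open_segment_def)
      then show "(\<exists>s1 s2. {s1,s2} \<in> {{a,b},{b,c},{a,c}} \<and> {m1,m2} \<noteq> {s1,s2} \<and> open_segment m1 m2 \<inter> open_segment s1 s2 \<noteq> {})" using qo' ne[of b c] by blast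
    next
      assume "(1-l) * bar b c a zz + l * bar b c a m = 0"
      then have "bar b c a q = 0" unfolding q_def bar_comb .
      then have "q \<in> closed_segment c a" using bar_zero_seg[OF nd2(2), of q] qh hullrot by simp
      then have "q \<in> open_segment a c" using qv by (simp add: open_segment_def closed_segment_commute)
      then show "(\<exists>s1 s2. {s1,s2} \<in> {{a,b},{b,c},{a,c}} \<and> {m1,m2} \<noteq> {s1,s2} \<and> open_segment m1 m2 \<inter> open_segment s1 s2 \<noteq> {})" using qo' ne[of a c] by blast
    next
      assume "(1-l) * bar c a b zz + l * bar c a b m = 0"
      then have "bar c a b q = 0" unfolding q_def bar_comb .
      then have "q \<in> closed_segment a b" using bar_zero_seg[OF nd, of q] qh by simp
      then have "q \<in> open_segment a b" using qv by (simp add: open_segment_def)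
      then show "(\<exists>s1 s2. {s1,s2} \<in> {{a,b},{b,c},{a,c}} \<and> {m1,m2} \<noteq> {s1,s2} \<and> open_segment m1 m2 \<inter> open_segment s1 s2 \<noteq> {})" using qo' ne[of a b] by blast
    qed
  qed
  show ?thesis
  proof (cases "m1 \<in> {a,b,c}")
    case False
    then show ?thesis using main[of m1 m2] by simp
  next
    case m1v: True
    show ?thesis
    proof (cases "m2 \<in> {a,b,c}")
      case False
      then show ?thesis using main[of m2 m1] by (simp add: insert_commute)
    next
      case True
      have side: "{m1,m2} = {a,b} \<or> {m1,m2} = {b,c} \<or> {m1,m2} = {a,c}" using m1v True E(1) by auto
      have zc: "zz \<in> closed_segment a b \<or> zz \<in> closed_segment b c \<or> zz \<in> closed_segment a c"
        using side z by (metis closed_segment_commute doubleton_eq_iff)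
      have False
      proof -
        from zc show False
        proof (elim disjE)
          assume "zz \<in> closed_segment a b"
          then have "ori a b zz = 0" by (rule seg_ori)
          then have "bar c a b zz = 0" by (simp add: bar_def)
          then show False using zi unfolding inT_def by simp
        next
          assume "zz \<in> closed_segment b c"
          then have "ori b c zz = 0" by (rule seg_ori)
          then have "bar a b c zz = 0" by (simp add: bar_def)
          then show False using zi unfolding inT_def by simp
        next
          assume "zz \<in> closed_segment a c"
          then have "ori a c zz = 0" by (rule seg_ori)
          then have "ori c a zz = 0" by (simp add: ori_swap[of c a])
          then have "bar b c a zz = 0" by (simp add: bar_def)
          then show False using zi unfolding inT_def by simp
        qed
      qed
      then show ?thesis ..
    qed
  qed
qed


lemma y2_exists:
  assumes nd: "ori a b c \<noteq> 0" and y0a: "y0 \<in> open_segment a b" and y0u: "y0 \<in> open_segment u v"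
    and uv: "ori a b u * ori a b v < 0"
  shows "\<exists>y2. y2 \<in> open_segment u v \<and> inT a b c y2"
proof -
  obtain m m' where mm: "{m,m'} = {u,v}" and ms: "ori a b c * ori a b m > 0"
  proof (cases "ori a b c * ori a b u > 0")
    case True then show ?thesis using that[of u v] by simp
  next
    case False
    have "ori a b u \<noteq> 0" "ori a b v \<noteq> 0" using uv by auto
    then have "ori a b c * ori a b v > 0" using False uv nd
      by (auto simp: zero_less_mult_iff mult_less_0_iff)
    then show ?thesis using that[of v u] by (simp add: insert_commute)
  qed
  have y0m: "y0 \<in> open_segment m m'" using y0u mm by (metis doubleton_eq_iff open_segment_commute)
  obtain r where r: "0 < r" "r < 1" "y0 = pt a b r" using y0a by (auto simp: open_seg_pt)
  have nd2: "ori b c a \<noteq> 0" "ori c a b \<noteq> 0" using ori_nd_rot[OF nd] by auto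
  have b1: "bar a b c y0 = 1 - r" using r(3) bar_vert[OF nd] by (simp add: pt_def bar_comb)
  have b2: "bar b c a y0 = r" using r(3) bar_vert[OF nd2(1)] by (simp add: pt_def bar_comb)
  have b3: "bar c a b y0 = 0" using r(3) by (simp add: pt_def bar_comb)
  have bm: "bar c a b m > 0" unfolding bar_def using ms
    by (auto simp: zero_less_divide_iff zero_less_mult_iff)
  obtain d where d: "0 < d" "d < 1" "(1-d) * bar a b c y0 + d * bar a b c m > 0"
      "(1-d) * bar b c a y0 + d * bar b c a m > 0"
    using small3[of "bar a b c y0" "bar b c a y0" 1 "bar a b c m" "bar b c a m" 0] b1 b2 r by auto
  define y2 where "y2 = (1 - d) *\<^sub>R y0 + d *\<^sub>R m"
  have "y2 \<in> open_segment m m'" unfolding y2_def by (rule open_seg_shrink[OF y0m d(1,2)])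
  then have y2o: "y2 \<in> open_segment u v" using mm by (metis doubleton_eq_iff open_segment_commute)
  have "inT a b c y2" unfolding inT_def y2_def bar_comb using d b3 bm by simp
  then show ?thesis using y2o by blast
qed

lemma apex_claim:
  assumes triT': "is_triangulation S T'" and nd: "ori a b c \<noteq> 0" and tS: "convex hull {a,b,c} \<inter> S = {a,b,c}"
    and sides: "{a,b} \<in> T'" "{b,c} \<in> T'" "{a,c} \<in> T'"
    and uw: "{u,w} \<in> T'" and vw: "{v,w} \<in> T'" and ndw: "ori u v w \<noteq> 0"
    and wS: "convex hull {u,v,w} \<inter> S = {u,v,w}"
    and y2: "y2 \<in> open_segment u v" and y2i: "inT a b c y2"
    and x: "x \<in> {a,b,c}" and xs: "sside u v w x"
  shows "x = w"
proof (rule ccontr)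
  assume xw: "x \<noteq> w"
  have xS: "x \<in> S" using x tS by blast
  have oux: "ori u v x \<noteq> 0" using xs unfolding sside_def by auto
  have xh: "x \<notin> convex hull {u,v,w}"
  proof
    assume "x \<in> convex hull {u,v,w}"
    then have "x \<in> {u,v,w}" using wS xS by blast
    then show False using oux xw by auto
  qed
  have ndw2: "ori v w u \<noteq> 0" "ori w u v \<noteq> 0" using ori_nd_rot[OF ndw] by auto
  obtain r where r: "0 < r" "r < 1" "y2 = pt u v r" using y2 by (auto simp: open_seg_pt)
  have yb: "bar u v w y2 = 1 - r" "bar v w u y2 = r" "bar w u v y2 = 0"
    using r(3) bar_vert[OF ndw] bar_vert[OF ndw2(1)] by (simp_all add: pt_def bar_comb)
  have y2b: "bar a b c y2 > 0" "bar b c a y2 > 0" "bar c a b y2 > 0" using y2i unfolding inT_def by auto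
  obtain e where e: "0 < e" "e < 1" "(1-e) * bar a b c y2 + e * bar a b c w > 0"
      "(1-e) * bar b c a y2 + e * bar b c a w > 0" "(1-e) * bar c a b y2 + e * bar c a b w > 0"
    using small3[OF y2b] by blast
  define y1 where "y1 = (1 - e) *\<^sub>R y2 + e *\<^sub>R w"
  have y1i: "inT a b c y1" unfolding inT_def y1_def bar_comb using e by simp
  have wv: "bar w u v w = 1" using bar_vert[OF ndw2(2)] .
  have y1b: "bar u v w y1 > 0" "bar v w u y1 > 0" "bar w u v y1 > 0"
    unfolding y1_def bar_comb using yb r e wv by simp_all
  have xw3: "bar w u v x > 0" unfolding bar_def using xs unfolding sside_def
    by (auto simp: zero_less_divide_iff zero_less_mult_iff)
  have neg: "bar u v w x < 0 \<or> bar v w u x < 0"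
    using xh hull3_iff[OF ndw] xw3 by auto
  obtain l where l: "0 < l" "l < 1" "(1-l) * bar u v w y1 + l * bar u v w x \<ge> 0"
      "(1-l) * bar v w u y1 + l * bar v w u x \<ge> 0"
      and l0: "(1-l) * bar u v w y1 + l * bar u v w x = 0 \<or> (1-l) * bar v w u y1 + l * bar v w u x = 0"
    using exit3[of "bar u v w y1" "bar v w u y1" 1 "bar u v w x" "bar v w u x" 1] y1b neg by auto
  define zz where "zz = (1 - l) *\<^sub>R y1 + l *\<^sub>R x"
  have zb: "bar u v w zz \<ge> 0" "bar v w u zz \<ge> 0" using l unfolding zz_def bar_comb by auto
  have zb3: "bar w u v zz > 0" unfolding zz_def bar_comb using l y1b xw3 by (simp add: add_pos_pos)
  have zh: "zz \<in> convex hull {u,v,w}" using zb zb3 hull3_iff[OF ndw] by simp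
  have xabc: "x \<in> convex hull {a,b,c}" using x by (auto intro: hull_inc)
  have zi: "inT a b c zz" unfolding zz_def by (rule inT_comb[OF nd y1i xabc]) (use l in auto)
  have bad: "\<And>m1 m2. {m1,m2} \<in> T' \<Longrightarrow> zz \<in> closed_segment m1 m2 \<Longrightarrow> False"
  proof -
    fix m1 m2 assume mT: "{m1,m2} \<in> T'" and zm: "zz \<in> closed_segment m1 m2"
    obtain s1 s2 where s: "{s1,s2} \<in> {{a,b},{b,c},{a,c}}" "{m1,m2} \<noteq> {s1,s2}"
        "open_segment m1 m2 \<inter> open_segment s1 s2 \<noteq> {}"
      using edge_enters[OF nd tS tri_sub[OF triT' mT] zm zi] by blast
    have sT: "{s1,s2} \<in> T'" using s(1) sides by auto
    show False using tri_disj[OF triT' mT sT s(2)] s(3) by simp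
  qed
  from l0 show False
  proof
    assume "(1-l) * bar u v w y1 + l * bar u v w x = 0"
    then have "bar u v w zz = 0" unfolding zz_def bar_comb .
    moreover have "zz \<in> convex hull {v,w,u}" using zh by (simp add: insert_commute)
    ultimately have "zz \<in> closed_segment v w" using bar_zero_seg[OF ndw2(1)] by simp
    then show False using bad[OF vw] by simp
  next
    assume "(1-l) * bar v w u y1 + l * bar v w u x = 0"
    then have "bar v w u zz = 0" unfolding zz_def bar_comb .
    moreover have "zz \<in> convex hull {w,u,v}" using zh by (simp add: insert_commute)
    ultimately have "zz \<in> closed_segment w u" using bar_zero_seg[OF ndw2(2)] by simp
    moreover have "{w,u} \<in> T'" using uw by (simp add: insert_commute)
    ultimately show False using bad by blast
  qed
qed


lemma pt_pt: "pt (pt a b s1) (pt a b s2) l = pt a b ((1 - l) * s1 + l * s2)"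
  by (simp add: pt_def algebra_simps)

lemma coll_between:
  assumes ab: "a \<noteq> b" and bc: "b \<noteq> c" and ac: "a \<noteq> c" and o: "ori a b c = 0"
  shows "c \<in> open_segment a b \<or> b \<in> open_segment a c \<or> a \<in> open_segment b c"
proof -
  obtain s where s: "c = pt a b s" using on_line_pt[OF ab o] by blast
  have s0: "s \<noteq> 0" using s ac by auto
  have s1: "s \<noteq> 1" using s bc by auto
  consider "0 < s \<and> s < 1" | "s > 1" | "s < 0" using s0 s1 by linarith
  then show ?thesis
  proof cases
    case 1 then show ?thesis using s ab by (auto simp: open_seg_pt)
  next
    case 2
    have "b = pt a c (1 / s)"
    proof -
      have "pt a c (1 / s) = pt (pt a b 0) (pt a b s) (1 / s)" unfolding s by simp
      also have "\<dots> = pt a b ((1 - 1/s) * 0 + (1/s) * s)" by (rule pt_pt)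
      also have "\<dots> = b" using 2 by simp
      finally show ?thesis by simp
    qed
    moreover have "0 < 1 / s" "1 / s < 1" using 2 by simp_all
    ultimately have "b \<in> open_segment a c" unfolding open_seg_pt using ac by blast
    then show ?thesis by blast
  next
    case 3
    define m where "m = - s / (1 - s)"
    have m: "0 < m" "m < 1" using 3 by (simp_all add: m_def field_simps)
    have "a = pt c b m"
    proof -
      have "pt c b m = pt (pt a b s) (pt a b 1) m" unfolding s by simp
      also have "\<dots> = pt a b ((1 - m) * s + m * 1)" by (rule pt_pt)
      also have "(1 - m) * s + m * 1 = 0" using 3 by (simp add: m_def field_simps)
      finally show ?thesis by simp
    qed
    then have "a \<in> open_segment c b" unfolding open_seg_pt using m bc by blast
    then show ?thesis by (simp add: open_segment_commute)
  qed
qed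

lemma line_between:
  assumes uv: "u \<noteq> v" and o: "ori u v c = 0" and y0: "y0 \<in> open_segment u v" and nc: "c \<notin> closed_segment u v"
  shows "\<exists>l. 0 < l \<and> l < 1 \<and> (u = pt c y0 l \<or> v = pt c y0 l)"
proof -
  obtain sc where sc: "c = pt u v sc" using on_line_pt[OF uv o] by blast
  obtain r where r: "0 < r" "r < 1" "y0 = pt u v r" using y0 by (auto simp: open_seg_pt)
  have "\<not> (0 \<le> sc \<and> sc \<le> 1)" using nc sc pt_closed by blast
  then consider "sc < 0" | "sc > 1" by linarith
  then show ?thesis
  proof cases
    case 1
    define l where "l = - sc / (r - sc)"
    have l: "0 < l" "l < 1" using 1 r by (simp_all add: l_def field_simps)
    have "pt c y0 l = pt u v ((1 - l) * sc + l * r)" unfolding sc r(3) by (rule pt_pt)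
    also have "(1 - l) * sc + l * r = 0" using 1 r by (simp add: l_def field_simps)
    finally show ?thesis using l by auto
  next
    case 2
    define l where "l = (sc - 1) / (sc - r)"
    have pos: "sc - r > 0" using 2 r by simp
    have l0: "0 < l" unfolding l_def using 2 pos by simp
    have l1: "l < 1" unfolding l_def using pos r by (simp add: divide_less_eq_1_pos)
    note l = l0 l1
    have ll: "l * (sc - r) = sc - 1" unfolding l_def using pos by simp
    have "pt c y0 l = pt u v ((1 - l) * sc + l * r)" unfolding sc r(3) by (rule pt_pt)
    also have "(1 - l) * sc + l * r = 1" using ll by (simp add: algebra_simps)
    finally show ?thesis using l by auto
  qed
qed

lemma rev_core:
  assumes fin: "finite S" and triT: "is_triangulation S T" and triT': "is_triangulation S T'"
    and TE: "T - E \<subseteq> T'"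
    and Econd: "\<forall>e\<in>E. \<forall>f\<in>E. e \<noteq> f \<longrightarrow> \<not> (\<exists>t\<in>triangles_of S T. e \<subseteq> t \<and> f \<subseteq> t)"
    and abc: "a \<noteq> b" "b \<noteq> c" "a \<noteq> c"
    and sides: "{a,b} \<in> T'" "{b,c} \<in> T'" "{a,c} \<in> T'"
    and tS: "convex hull {a,b,c} \<inter> S = {a,b,c}"
    and nab: "{a,b} \<notin> T" and nbc: "{b,c} \<notin> T"
  shows False
proof -
  have abedge: "{a,b} \<in> edges_of S" using tri_sub[OF triT' sides(1)] .
  have S3: "a \<in> S" "b \<in> S" "c \<in> S" using tS by auto
  have nd: "ori a b c \<noteq> 0"
  proof
    assume o: "ori a b c = 0"
    have f1: "open_segment a b \<inter> S = {}" using edge_open_free[OF tri_sub[OF triT' sides(1)]] .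
    have f2: "open_segment b c \<inter> S = {}" using edge_open_free[OF tri_sub[OF triT' sides(2)]] .
    have f3: "open_segment a c \<inter> S = {}" using edge_open_free[OF tri_sub[OF triT' sides(3)]] .
    show False using coll_between[OF abc o] f1 f2 f3 S3 by blast
  qed
  obtain g where gT: "g \<in> T" and gc: "\<not> noncrossing {a,b} g" using tri_max[OF triT abedge nab] by blast
  obtain u v where g: "g = {u,v}" "u \<noteq> v" "u \<in> S" "v \<in> S" "closed_segment u v \<inter> S = {u,v}"
    using tri_edgeE[OF triT gT] by metis
  have uvT: "{u,v} \<in> T" using gT g by simp
  have gedge: "{u,v} \<in> edges_of S" using tri_sub[OF triT uvT] .
  have cr: "{a,b} \<noteq> {u,v} \<and> open_segment a b \<inter> open_segment u v \<noteq> {}"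
    using cross_iff[OF abedge gedge] gc g by simp
  then obtain y0 where y0a: "y0 \<in> open_segment a b" and y0u: "y0 \<in> open_segment u v" by blast
  have tr1: "ori u v a * ori u v b < 0" using transversal[OF gedge abedge _ y0u y0a] cr by metis
  have tr2: "ori a b u * ori a b v < 0" using transversal[OF abedge gedge _ y0a y0u] cr by blast
  obtain y2 where y2: "y2 \<in> open_segment u v" "inT a b c y2" using y2_exists[OF nd y0a y0u tr2] by blast
  have gE: "{u,v} \<in> E"
  proof (rule ccontr)
    assume "{u,v} \<notin> E"
    then have "{u,v} \<in> T'" using TE uvT by blast
    then have "noncrossing {a,b} {u,v}" using tri_nc[OF triT' sides(1)] by blast
    then show False using gc g by simp
  qed
  have apex: "\<And>x. x \<in> {a,b,c} \<Longrightarrow> ori u v x \<noteq> 0 \<Longrightarrow>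
      {u,x} \<in> T \<and> {v,x} \<in> T \<and> (\<forall>x'\<in>{a,b,c}. sside u v x x' \<longrightarrow> x' = x)"
  proof -
    fix x assume x: "x \<in> {a,b,c}" and ox: "ori u v x \<noteq> 0"
    have xS: "x \<in> S" using x S3 by auto
    obtain w where wS: "w \<in> S" and ws: "sside u v x w" and uw: "{u,w} \<in> T" and vw: "{v,w} \<in> T"
        and wh: "convex hull {u,v,w} \<inter> S = {u,v,w}"
      using adj_tri[OF fin triT uvT xS ox] by blast
    have ndw: "ori u v w \<noteq> 0" using ws unfolding sside_def by auto
    have wu: "w \<noteq> u" "w \<noteq> v" using ndw by auto
    have tri_w: "{u,v,w} \<in> triangles_of S T"
    proof -
      have "u \<noteq> v \<and> v \<noteq> w \<and> u \<noteq> w \<and> {u,v} \<in> T \<and> {v,w} \<in> T \<and> {u,w} \<in> T \<and>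
            convex hull {u,v,w} \<inter> S = {u,v,w}" using g(2) wu uvT vw uw wh by simp
      then show ?thesis unfolding triangles_of_def by blast
    qed
    have sub1: "{u,v} \<subseteq> {u,v,w}" "{u,w} \<subseteq> {u,v,w}" "{v,w} \<subseteq> {u,v,w}" by auto
    have ne1: "{u,v} \<noteq> {u,w}"
    proof
      assume "{u,v} = {u,w}"
      then have "w \<in> {u,v}" by blast
      then show False using wu by blast
    qed
    have ne2: "{u,v} \<noteq> {v,w}"
    proof
      assume "{u,v} = {v,w}"
      then have "w \<in> {u,v}" by blast
      then show False using wu by blast
    qed
    have uwE: "{u,w} \<notin> E"
    proof
      assume h: "{u,w} \<in> E"
      have "{u,v} \<noteq> {u,w} \<longrightarrow> \<not> (\<exists>t\<in>triangles_of S T. {u,v} \<subseteq> t \<and> {u,w} \<subseteq> t)"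
        using bspec[OF bspec[OF Econd gE] h] .
      then have n: "\<not> (\<exists>t\<in>triangles_of S T. {u,v} \<subseteq> t \<and> {u,w} \<subseteq> t)" using ne1 by blast
      have "\<exists>t\<in>triangles_of S T. {u,v} \<subseteq> t \<and> {u,w} \<subseteq> t" using tri_w sub1(1,2) by blast
      then show False using n by blast
    qed
    have vwE: "{v,w} \<notin> E"
    proof
      assume h: "{v,w} \<in> E"
      have "{u,v} \<noteq> {v,w} \<longrightarrow> \<not> (\<exists>t\<in>triangles_of S T. {u,v} \<subseteq> t \<and> {v,w} \<subseteq> t)"
        using bspec[OF bspec[OF Econd gE] h] .
      then have n: "\<not> (\<exists>t\<in>triangles_of S T. {u,v} \<subseteq> t \<and> {v,w} \<subseteq> t)" using ne2 by blast
      have "\<exists>t\<in>triangles_of S T. {u,v} \<subseteq> t \<and> {v,w} \<subseteq> t" using tri_w sub1(1,3) by blast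
      then show False using n by blast
    qed
    have uwT': "{u,w} \<in> T'" using uw uwE TE by blast
    have vwT': "{v,w} \<in> T'" using vw vwE TE by blast
    have cl: "\<And>x'. x' \<in> {a,b,c} \<Longrightarrow> sside u v w x' \<Longrightarrow> x' = w"
      by (rule apex_claim[OF triT' nd tS sides uwT' vwT' ndw wh y2])
    have wsx: "sside u v w x" using ws unfolding sside_def by (simp add: mult.commute)
    have xw: "x = w" using cl[OF x wsx] .
    have all: "\<forall>x'\<in>{a,b,c}. sside u v x x' \<longrightarrow> x' = x" using cl xw by simp
    show "{u,x} \<in> T \<and> {v,x} \<in> T \<and> (\<forall>x'\<in>{a,b,c}. sside u v x x' \<longrightarrow> x' = x)"
      using uw vw xw all by simp
  qed
  have oa: "ori u v a \<noteq> 0" "ori u v b \<noteq> 0" using tr1 by auto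
  have oc: "ori u v c = 0"
  proof (rule ccontr)
    assume occ: "ori u v c \<noteq> 0"
    have ab2: "ori u v a > 0 \<and> ori u v b < 0 \<or> ori u v a < 0 \<and> ori u v b > 0"
      using tr1 by (simp add: mult_less_0_iff)
    have "ori u v a * ori u v c > 0 \<or> ori u v b * ori u v c > 0"
    proof (cases "ori u v c > 0")
      case True
      then show ?thesis using ab2 by (auto intro: mult_pos_pos)
    next
      case False
      then have "ori u v c < 0" using occ by simp
      then show ?thesis using ab2 by (auto intro: mult_neg_neg)
    qed
    then have "sside u v a c \<or> sside u v b c" unfolding sside_def .
    then show False
    proof
      assume "sside u v a c"
      then have "c = a" using apex[of a] oa by auto
      then show False using abc by simp
    next
      assume "sside u v b c"
      then have "c = b" using apex[of b] oa by auto
      then show False using abc by simp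
    qed
  qed
  have cuv: "c = u \<or> c = v"
  proof (cases "c \<in> closed_segment u v")
    case True then show ?thesis using g(5) S3 by blast
  next
    case False
    obtain l where l: "0 < l" "l < 1" "u = pt c y0 l \<or> v = pt c y0 l"
      using line_between[OF g(2) oc y0u False] by blast
    obtain r where r: "0 < r" "r < 1" "y0 = pt a b r" using y0a by (auto simp: open_seg_pt)
    have nd2: "ori b c a \<noteq> 0" "ori c a b \<noteq> 0" using ori_nd_rot[OF nd] by auto
    have inpt: "inT a b c (pt c y0 l)"
    proof -
      have "bar a b c (pt c y0 l) = l * (1 - r)" using bar_vert[OF nd] r(3) by (simp add: pt_def bar_comb)
      moreover have "bar b c a (pt c y0 l) = l * r" using bar_vert[OF nd2(1)] r(3) by (simp add: pt_def bar_comb)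
      moreover have "bar c a b (pt c y0 l) = 1 - l" using bar_vert[OF nd2(2)] r(3) by (simp add: pt_def bar_comb)
      ultimately show ?thesis unfolding inT_def using l r by simp
    qed
    have "pt c y0 l \<notin> S" using inT_notS[OF nd tS inpt] .
    then show ?thesis using l g(3,4) by auto
  qed
  have "{u,b} \<in> T" "{v,b} \<in> T" using apex[of b] oa by auto
  then have "{c,b} \<in> T" using cuv by auto
  then show False using nbc by (simp add: insert_commute)
qed


lemma two_subset_cases:
  assumes "x \<noteq> y" "{x,y} \<subseteq> {a,b,c}"
  shows "{x,y} = {a,b} \<or> {x,y} = {b,c} \<or> {x,y} = {a,c}"
  using assms by auto

lemma rev_pairs:
  assumes fin: "finite S" and triT: "is_triangulation S T" and triT': "is_triangulation S T'"
    and TE: "T - E \<subseteq> T'"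
    and Econd: "\<forall>e\<in>E. \<forall>f\<in>E. e \<noteq> f \<longrightarrow> \<not> (\<exists>t\<in>triangles_of S T. e \<subseteq> t \<and> f \<subseteq> t)"
    and abc: "a \<noteq> b" "b \<noteq> c" "a \<noteq> c"
    and sides: "{a,b} \<in> T'" "{b,c} \<in> T'" "{a,c} \<in> T'"
    and tS: "convex hull {a,b,c} \<inter> S = {a,b,c}"
    and e: "e \<in> {{a,b},{b,c},{a,c}}" "f \<in> {{a,b},{b,c},{a,c}}" "e \<noteq> f" "e \<notin> T" "f \<notin> T"
  shows False
proof -
  note core = rev_core[OF fin triT triT' TE Econd]
  have h1: "{a,b} \<notin> T \<Longrightarrow> {b,c} \<notin> T \<Longrightarrow> False"
    using core[OF abc sides tS] by blast
  have h2: "{a,b} \<notin> T \<Longrightarrow> {a,c} \<notin> T \<Longrightarrow> False"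
  proof -
    assume n1: "{a,b} \<notin> T" and n2: "{a,c} \<notin> T"
    have s: "{b,a} \<in> T'" "{a,c} \<in> T'" "{b,c} \<in> T'" using sides by (simp_all add: insert_commute)
    have t: "convex hull {b,a,c} \<inter> S = {b,a,c}" using tS by (simp add: insert_commute)
    show False using core[OF abc(1)[symmetric] abc(3) abc(2) s t] n1 n2 by (simp add: insert_commute)
  qed
  have h3: "{b,c} \<notin> T \<Longrightarrow> {a,c} \<notin> T \<Longrightarrow> False"
  proof -
    assume n1: "{b,c} \<notin> T" and n2: "{a,c} \<notin> T"
    have s: "{b,c} \<in> T'" "{c,a} \<in> T'" "{b,a} \<in> T'" using sides by (simp_all add: insert_commute)
    have t: "convex hull {b,c,a} \<inter> S = {b,c,a}" using tS by (simp add: insert_commute)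
    show False using core[OF abc(2) abc(3)[symmetric] abc(1)[symmetric] s t] n1 n2 by (simp add: insert_commute)
  qed
  show False using e h1 h2 h3 by auto
qed

lemma flip_rev:
  assumes fin: "finite S" and triT: "is_triangulation S T" and pf: "parallel_flip S T T'"
  shows "parallel_flip S T' T"
proof -
  obtain E E' where ET: "E \<subseteq> T" and T': "T' = (T - E) \<union> E'" and triT': "is_triangulation S T'"
      and Econd: "\<forall>e\<in>E. \<forall>f\<in>E. e \<noteq> f \<longrightarrow> \<not> (\<exists>t\<in>triangles_of S T. e \<subseteq> t \<and> f \<subseteq> t)"
    using pf unfolding parallel_flip_def by blast
  have TE: "T - E \<subseteq> T'" using T' by blast
  have cond: "\<forall>e\<in>T' - T. \<forall>f\<in>T' - T. e \<noteq> f \<longrightarrow> \<not> (\<exists>t\<in>triangles_of S T'. e \<subseteq> t \<and> f \<subseteq> t)"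
  proof (intro ballI impI notI)
    fix e f assume eT: "e \<in> T' - T" and fT: "f \<in> T' - T" and ef: "e \<noteq> f"
      and ex: "\<exists>t\<in>triangles_of S T'. e \<subseteq> t \<and> f \<subseteq> t"
    then obtain t where tt: "t \<in> triangles_of S T'" and et: "e \<subseteq> t" and ft: "f \<subseteq> t" by blast
    obtain a b c where t: "t = {a,b,c}" "a \<noteq> b" "b \<noteq> c" "a \<noteq> c" "{a,b} \<in> T'" "{b,c} \<in> T'" "{a,c} \<in> T'"
        "convex hull {a,b,c} \<inter> S = {a,b,c}"
      using tt unfolding triangles_of_def by blast
    obtain x y where xy: "e = {x,y}" "x \<noteq> y" using tri_edgeE[OF triT'] eT by blast
    obtain x' y' where xy': "f = {x',y'}" "x' \<noteq> y'" using tri_edgeE[OF triT'] fT by blast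
    have e3: "e \<in> {{a,b},{b,c},{a,c}}" using two_subset_cases[OF xy(2)] et xy(1) t(1) by auto
    have f3: "f \<in> {{a,b},{b,c},{a,c}}" using two_subset_cases[OF xy'(2)] ft xy'(1) t(1) by auto
    show False using rev_pairs[OF fin triT triT' TE Econd t(2,3,4,5,6,7,8) e3 f3 ef] eT fT by blast
  qed
  show ?thesis unfolding parallel_flip_def
  proof (intro exI conjI)
    show "T' - T \<subseteq> T'" by blast
    show "T = (T' - (T' - T)) \<union> T" by blast
    show "is_triangulation S T" by (rule triT)
  qed (rule cond)
qed


lemma fp_single: "is_flip_path S [x] \<longleftrightarrow> is_triangulation S x"
  unfolding is_flip_path_def by simp

lemma fp_cons: "is_flip_path S (x # y # ys) \<longleftrightarrow>
    is_triangulation S x \<and> parallel_flip S x y \<and> is_flip_path S (y # ys)"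
proof
  assume h: "is_flip_path S (x # y # ys)"
  have t: "\<forall>X\<in>set (x # y # ys). is_triangulation S X" using h unfolding is_flip_path_def by blast
  have f: "\<And>i. Suc i < length (x # y # ys) \<Longrightarrow> parallel_flip S ((x # y # ys) ! i) ((x # y # ys) ! Suc i)"
    using h unfolding is_flip_path_def by blast
  have "parallel_flip S x y" using f[of 0] by simp
  moreover have "is_flip_path S (y # ys)"
    unfolding is_flip_path_def
  proof (intro conjI allI impI)
    show "y # ys \<noteq> []" by simp
    show "\<forall>X\<in>set (y # ys). is_triangulation S X" using t by simp
    fix i assume "Suc i < length (y # ys)"
    then show "parallel_flip S ((y # ys) ! i) ((y # ys) ! Suc i)" using f[of "Suc i"] by simp
  qed
  ultimately show "is_triangulation S x \<and> parallel_flip S x y \<and> is_flip_path S (y # ys)" using t by simp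
next
  assume h: "is_triangulation S x \<and> parallel_flip S x y \<and> is_flip_path S (y # ys)"
  have t: "\<forall>X\<in>set (y # ys). is_triangulation S X" and
       f: "\<And>i. Suc i < length (y # ys) \<Longrightarrow> parallel_flip S ((y # ys) ! i) ((y # ys) ! Suc i)"
    using h unfolding is_flip_path_def by blast+
  show "is_flip_path S (x # y # ys)" unfolding is_flip_path_def
  proof (intro conjI allI impI)
    show "x # y # ys \<noteq> []" by simp
    show "\<forall>X\<in>set (x # y # ys). is_triangulation S X" using t h by simp
    fix i assume i: "Suc i < length (x # y # ys)"
    show "parallel_flip S ((x # y # ys) ! i) ((x # y # ys) ! Suc i)"
    proof (cases i)
      case 0 then show ?thesis using h by simp
    next
      case (Suc j) then show ?thesis using f[of j] i by simp
    qed
  qed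
qed

lemma fp_app:
  "is_flip_path S (x # xs) \<Longrightarrow> is_flip_path S Q \<Longrightarrow> last (x # xs) = hd Q \<Longrightarrow> is_flip_path S ((x # xs) @ tl Q)"
proof (induction xs arbitrary: x)
  case Nil
  have "Q \<noteq> []" using Nil.prems(2) unfolding is_flip_path_def by blast
  then have "x # tl Q = Q" using Nil.prems(3) by (cases Q) auto
  then show ?case using Nil.prems(2) by simp
next
  case (Cons y ys)
  have h: "is_triangulation S x" "parallel_flip S x y" "is_flip_path S (y # ys)"
    using Cons.prems(1) fp_cons by blast+
  have "is_flip_path S ((y # ys) @ tl Q)" using Cons.IH[OF h(3) Cons.prems(2)] Cons.prems(3) by simp
  then show ?case using h fp_cons[of S x y "ys @ tl Q"] by simp
qed

lemma fp_nonempty: "is_flip_path S P \<Longrightarrow> P \<noteq> []"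
  unfolding is_flip_path_def by blast

lemma fp_rev: "finite S \<Longrightarrow> is_flip_path S (x # xs) \<Longrightarrow> is_flip_path S (rev (x # xs))"
proof (induction xs arbitrary: x)
  case Nil then show ?case by simp
next
  case (Cons y ys)
  have h: "is_triangulation S x" "parallel_flip S x y" "is_flip_path S (y # ys)"
    using Cons.prems(2) fp_cons by blast+
  have ty: "is_triangulation S y" using h(3) unfolding is_flip_path_def by simp
  have r1: "is_flip_path S (rev (y # ys))" using Cons.IH[OF Cons.prems(1) h(3)] .
  have yx: "parallel_flip S y x" using flip_rev[OF Cons.prems(1) h(1) h(2)] .
  have p2: "is_flip_path S [y, x]" using fp_cons[of S y x "[]"] ty yx h(1) fp_single by simp
  obtain z zs where zz: "rev (y # ys) = z # zs" by (cases "rev (y # ys)") auto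
  have lz: "last (z # zs) = y"
  proof -
    have "last (rev (y # ys)) = y" by simp
    then show ?thesis unfolding zz .
  qed
  have r1': "is_flip_path S (z # zs)" using r1 zz by simp
  have "is_flip_path S ((z # zs) @ tl [y, x])"
    using fp_app[OF r1' p2] lz by simp
  then show ?case using zz by simp
qed

lemma path_concat:
  assumes fin: "finite S" and p: "is_flip_path S P" and q: "is_flip_path S Q" and l: "last P = last Q"
  shows "is_flip_path S (P @ tl (rev Q)) \<and> hd (P @ tl (rev Q)) = hd P \<and> last (P @ tl (rev Q)) = hd Q
    \<and> path_length (P @ tl (rev Q)) = path_length P + path_length Q"
proof -
  obtain x xs where P: "P = x # xs" using fp_nonempty[OF p] by (cases P) auto
  obtain y ys where Q: "Q = y # ys" using fp_nonempty[OF q] by (cases Q) auto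
  have rq: "is_flip_path S (rev Q)" using fp_rev[OF fin] q Q by simp
  have hq: "hd (rev Q) = last Q" using Q by (simp add: hd_rev)
  have path: "is_flip_path S (P @ tl (rev Q))" using fp_app[of S x xs "rev Q"] p rq P l hq by simp
  have hd: "hd (P @ tl (rev Q)) = hd P" using P by simp
  have last: "last (P @ tl (rev Q)) = hd Q"
  proof (cases "tl (rev Q) = []")
    case True
    then have "ys = []" using Q by (cases ys rule: rev_cases) auto
    then show ?thesis using True P Q l by simp
  next
    case False
    have "last (tl (rev Q)) = last (rev Q)" using False by (metis last_tl)
    then show ?thesis using False Q by (simp add: last_rev)
  qed
  have len: "path_length (P @ tl (rev Q)) = path_length P + path_length Q"
    unfolding path_length_def using P Q by simp
  show ?thesis using path hd last len by simp
qed

lemma dist_le: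
  assumes "is_flip_path S P" "hd P = X" "last P = Y"
  shows "flip_dist S X Y \<le> path_length P"
  unfolding flip_dist_def by (rule Least_le) (use assms in blast)


lemma card1_eq: "finite X \<Longrightarrow> card X \<le> 1 \<Longrightarrow> x \<in> X \<Longrightarrow> y \<in> X \<Longrightarrow> x = y"
  using card_le_Suc0_iff_eq by fastforce

theorem theorem2:
  fixes S :: "point set" and k :: nat
    and T :: "nat \<Rightarrow> triangulation"
    and C :: triangulation
    and P :: "nat \<Rightarrow> triangulation list"
    and A :: "(nat \<times> nat) set"
  assumes "finite S"
    and "\<forall>i\<in>{1..k}. is_triangulation S (T i)"
    and "is_triangulation S C"
    and "\<forall>i\<in>{1..k}. is_flip_path S (P i) \<and> hd (P i) = T i \<and> last (P i) = C"
    and "is_cycle_packing k A"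
  shows "(\<Sum>i=1..k. real (path_length (P i))) \<ge>
           (\<Sum>(i,j)\<in>A. real (flip_dist S (T i) (T j))) / 2"
proof -
  note fin = assms(1)
  have Asub: "A \<subseteq> {(i,j). i \<in> {1..k} \<and> j \<in> {1..k} \<and> i \<noteq> j}"
    using assms(5) unfolding is_cycle_packing_def by blast
  have deg: "\<And>v. card {j. (v,j) \<in> A} \<le> 1 \<and> card {i. (i,v) \<in> A} \<le> 1"
    using assms(5) unfolding is_cycle_packing_def by blast
  have Asub2: "A \<subseteq> {1..k} \<times> {1..k}" using Asub by auto
  have fA: "finite A" using Asub2 finite_subset by blast
  define L where "L = (\<lambda>i. real (path_length (P i)))"
  have Lnn: "\<And>i. L i \<ge> 0" unfolding L_def by simp
  have dle: "\<And>x. x \<in> A \<Longrightarrow> real (flip_dist S (T (fst x)) (T (snd x))) \<le> L (fst x) + L (snd x)"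
  proof -
    fix x assume xA: "x \<in> A"
    obtain i j where x: "x = (i,j)" by (cases x)
    have ij: "i \<in> {1..k}" "j \<in> {1..k}" using xA x Asub2 by auto
    have pi: "is_flip_path S (P i)" "hd (P i) = T i" "last (P i) = C" using assms(4) ij(1) by auto
    have pj: "is_flip_path S (P j)" "hd (P j) = T j" "last (P j) = C" using assms(4) ij(2) by auto
    have c: "is_flip_path S (P i @ tl (rev (P j))) \<and> hd (P i @ tl (rev (P j))) = hd (P i)
        \<and> last (P i @ tl (rev (P j))) = hd (P j)
        \<and> path_length (P i @ tl (rev (P j))) = path_length (P i) + path_length (P j)"
      using path_concat[OF fin pi(1) pj(1)] pi(3) pj(3) by simp
    have "flip_dist S (T i) (T j) \<le> path_length (P i @ tl (rev (P j)))"
      using dist_le[of S "P i @ tl (rev (P j))" "T i" "T j"] c pi(2) pj(2) by simp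
    then have "flip_dist S (T i) (T j) \<le> path_length (P i) + path_length (P j)" using c by simp
    then show "real (flip_dist S (T (fst x)) (T (snd x))) \<le> L (fst x) + L (snd x)"
      unfolding L_def x by simp
  qed
  have injf: "inj_on fst A"
  proof (rule inj_onI)
    fix x y assume xA: "x \<in> A" and yA: "y \<in> A" and e: "fst x = fst y"
    obtain i j where x: "x = (i,j)" by (cases x)
    obtain i' j' where y: "y = (i',j')" by (cases y)
    have fs: "finite {j. (i,j) \<in> A}" using finite_subset[of "{j. (i,j) \<in> A}" "{1..k}"] Asub2 by auto
    have "j = j'" using card1_eq[OF fs deg[of i, THEN conjunct1]] xA yA x y e by simp
    then show "x = y" using x y e by simp
  qed
  have injs: "inj_on snd A"
  proof (rule inj_onI)
    fix x y assume xA: "x \<in> A" and yA: "y \<in> A" and e: "snd x = snd y"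
    obtain i j where x: "x = (i,j)" by (cases x)
    obtain i' j' where y: "y = (i',j')" by (cases y)
    have fs: "finite {i. (i,j) \<in> A}" using finite_subset[of "{i. (i,j) \<in> A}" "{1..k}"] Asub2 by auto
    have "i = i'" using card1_eq[OF fs deg[of j, THEN conjunct2]] xA yA x y e by simp
    then show "x = y" using x y e by simp
  qed
  have s1: "(\<Sum>x\<in>A. L (fst x)) \<le> (\<Sum>i=1..k. L i)"
  proof -
    have "(\<Sum>x\<in>A. L (fst x)) = (\<Sum>i\<in>fst ` A. L i)" using sum.reindex[OF injf, of L] by simp
    also have "\<dots> \<le> (\<Sum>i=1..k. L i)" by (rule sum_mono2) (use Asub2 Lnn in auto)
    finally show ?thesis .
  qed
  have s2: "(\<Sum>x\<in>A. L (snd x)) \<le> (\<Sum>i=1..k. L i)"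
  proof -
    have "(\<Sum>x\<in>A. L (snd x)) = (\<Sum>i\<in>snd ` A. L i)" using sum.reindex[OF injs, of L] by simp
    also have "\<dots> \<le> (\<Sum>i=1..k. L i)" by (rule sum_mono2) (use Asub2 Lnn in auto)
    finally show ?thesis .
  qed
  have "(\<Sum>(i,j)\<in>A. real (flip_dist S (T i) (T j))) = (\<Sum>x\<in>A. real (flip_dist S (T (fst x)) (T (snd x))))"
    by (simp add: case_prod_beta)
  also have "\<dots> \<le> (\<Sum>x\<in>A. L (fst x) + L (snd x))" by (rule sum_mono) (rule dle)
  also have "\<dots> = (\<Sum>x\<in>A. L (fst x)) + (\<Sum>x\<in>A. L (snd x))" by (rule sum.distrib)
  finally have "(\<Sum>(i,j)\<in>A. real (flip_dist S (T i) (T j))) \<le> 2 * (\<Sum>i=1..k. L i)" using s1 s2 by linarith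
  then show ?thesis unfolding L_def by simp
qed


end
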